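(* Let $h_1\in L^1(p)$ and $h_2\in L^2(p)$ be weakly differentiable functions on $]a,b[$ such that $h_1'<0$ and $h_2'<0$ almost everywhere. Then $$\operatorname*{ess\,inf}_{]a,b[}\left(-\frac{\widetilde{\mathcal{T}} h_2}{h_2'\,w}\right)\leq C(p,w)\leq \operatorname*{ess\,sup}_{]a,b[}\left(-\frac{\widetilde{\mathcal{T}} h_1}{h_1'\,w}\right).$$ Furthermore, if $-\widetilde{\mathcal{T}} h_2/(h_2'w)$ is (a.e.) constant on $]a,b[$, then $h_2$ saturates the weighted Poincaré inequality $\mathrm{PI}(p,w)$, i.e. $\mathrm{Var}_p[h_2]=C(p,w)\,\mathbb{E}_p[|h_2'|^2w]$.
   Context: Let $-\infty\le a<b\le\infty$ and let $p\in L^1(]a,b[)$ with $p>0$ a.e. and $\int_a^b p=1$ (a probability density on $]a,b[$). A weight is a function $w\in L^1_{\mathrm{loc}}(]a,b[)$ with $w>0$ a.e. and $pw\in L^1_{\mathrm{loc}}(]a,b[)$; fix such a weight $w$. Write $\mathbb{E}_p[f]=\int_a^b fp$ and $\mathrm{Var}_p$ for the corresponding variance. A function is weakly differentiable if it is locally absolutely continuous on $]a,b[$ (derivative $h'\in L^1_{\mathrm{loc}}$). Let $H^1(p,w)=\{h\in L^2(p): h \text{ weakly differentiable}, h'\in L^2(pw)\}$. The weighted Poincaré constant $C(p,w)\in[0,\infty]$ is the smallest constant $C$ such that $\mathrm{Var}_p[h]\le C\,\mathbb{E}_p[|h'|^2w]$ for all $h\in H^1(p,w)$. For $h\in L^1(p)$,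 define $\widetilde{\mathcal{T}} h(x)=\frac{1}{p(x)}\int_a^x (h-\mathbb{E}_p[h])\,p$. *)

theory Defs
  imports "HOL-Analysis.Analysis"
begin

definition oiv :: "ereal \<Rightarrow> ereal \<Rightarrow> real set" where
  "oiv a b = {x. a < ereal x \<and> ereal x < b}"

definition loc_integrable :: "real set \<Rightarrow> (real \<Rightarrow> real) \<Rightarrow> bool" where
  "loc_integrable I f \<longleftrightarrow> (\<forall>c d. {c..d} \<subseteq> I \<longrightarrow> set_integrable lborel {c..d} f)"

definition is_density :: "ereal \<Rightarrow> ereal \<Rightarrow> (real \<Rightarrow> real) \<Rightarrow> bool" where
  "is_density a b p \<longleftrightarrow> set_integrable lborel (oiv a b) p
     \<and> (AE x in lborel. x \<in> oiv a b \<longrightarrow> p x > 0)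
     \<and> (LINT x:oiv a b|lborel. p x) = 1"

definition is_weight :: "ereal \<Rightarrow> ereal \<Rightarrow> (real \<Rightarrow> real) \<Rightarrow> (real \<Rightarrow> real) \<Rightarrow> bool" where
  "is_weight a b p w \<longleftrightarrow> loc_integrable (oiv a b) w
     \<and> (AE x in lborel. x \<in> oiv a b \<longrightarrow> w x > 0)
     \<and> loc_integrable (oiv a b) (\<lambda>x. p x * w x)"

text \<open>h is weakly differentiable on I with weak derivative h': h is locally absolutely
  continuous, i.e. the indefinite integral of the locally integrable function h'.\<close>
definition weak_deriv :: "real set \<Rightarrow> (real \<Rightarrow> real) \<Rightarrow> (real \<Rightarrow> real) \<Rightarrow> bool" where
  "weak_deriv I h h' \<longleftrightarrow> loc_integrable I h'
     \<and> (\<forall>x\<in>I. \<forall>y\<in>I. x \<le> y \<longrightarrow> h y - h x = (LINT t:{x..y}|lborel. h' t))"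

definition in_L1 :: "ereal \<Rightarrow> ereal \<Rightarrow> (real \<Rightarrow> real) \<Rightarrow> (real \<Rightarrow> real) \<Rightarrow> bool" where
  "in_L1 a b p h \<longleftrightarrow> set_integrable lborel (oiv a b) (\<lambda>x. h x * p x)"

definition in_L2 :: "ereal \<Rightarrow> ereal \<Rightarrow> (real \<Rightarrow> real) \<Rightarrow> (real \<Rightarrow> real) \<Rightarrow> bool" where
  "in_L2 a b p h \<longleftrightarrow> h \<in> borel_measurable (restrict_space lborel (oiv a b))
     \<and> set_integrable lborel (oiv a b) (\<lambda>x. (h x)\<^sup>2 * p x)"

definition Ep :: "ereal \<Rightarrow> ereal \<Rightarrow> (real \<Rightarrow> real) \<Rightarrow> (real \<Rightarrow> real) \<Rightarrow> real" where
  "Ep a b p h = (LINT x:oiv a b|lborel. h x * p x)"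

definition Varp :: "ereal \<Rightarrow> ereal \<Rightarrow> (real \<Rightarrow> real) \<Rightarrow> (real \<Rightarrow> real) \<Rightarrow> real" where
  "Varp a b p h = (LINT x:oiv a b|lborel. (h x - Ep a b p h)\<^sup>2 * p x)"

definition energy :: "ereal \<Rightarrow> ereal \<Rightarrow> (real \<Rightarrow> real) \<Rightarrow> (real \<Rightarrow> real) \<Rightarrow> (real \<Rightarrow> real) \<Rightarrow> ereal" where
  "energy a b p w h' = enn2ereal (\<integral>\<^sup>+ x\<in>oiv a b. ennreal ((h' x)\<^sup>2 * w x * p x) \<partial>lborel)"

definition in_H1 :: "ereal \<Rightarrow> ereal \<Rightarrow> (real \<Rightarrow> real) \<Rightarrow> (real \<Rightarrow> real) \<Rightarrow> (real \<Rightarrow> real) \<Rightarrow> (real \<Rightarrow> real) \<Rightarrow> bool" where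
  "in_H1 a b p w h h' \<longleftrightarrow> in_L2 a b p h \<and> weak_deriv (oiv a b) h h'
     \<and> set_integrable lborel (oiv a b) (\<lambda>x. (h' x)\<^sup>2 * (p x * w x))"

definition poincare_const :: "ereal \<Rightarrow> ereal \<Rightarrow> (real \<Rightarrow> real) \<Rightarrow> (real \<Rightarrow> real) \<Rightarrow> ereal" where
  "poincare_const a b p w = Inf {C. C \<ge> 0 \<and> (\<forall>h h'. in_H1 a b p w h h' \<longrightarrow>
       ereal (Varp a b p h) \<le> C * energy a b p w h')}"

definition Tt :: "ereal \<Rightarrow> ereal \<Rightarrow> (real \<Rightarrow> real) \<Rightarrow> (real \<Rightarrow> real) \<Rightarrow> real \<Rightarrow> real" where
  "Tt a b p h x = (1 / p x) *
     (LINT t:{t. a < ereal t \<and> t \<le> x}|lborel. (h t - Ep a b p h) * p t)"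

definition ess_sup_on :: "real set \<Rightarrow> (real \<Rightarrow> real) \<Rightarrow> ereal" where
  "ess_sup_on I f = Inf {z. AE x in lborel. x \<in> I \<longrightarrow> ereal (f x) \<le> z}"

definition ess_inf_on :: "real set \<Rightarrow> (real \<Rightarrow> real) \<Rightarrow> ereal" where
  "ess_inf_on I f = Sup {z. AE x in lborel. x \<in> I \<longrightarrow> z \<le> ereal (f x)}"

end

theory Submission
  imports Defs
begin

lemma oiv_sets[measurable]: "oiv a b \<in> sets borel"
  unfolding oiv_def by measurable

lemma oiv_sets_lborel[measurable]: "oiv a b \<in> sets lborel"
  by simp

lemma oiv_between: "x \<in> oiv a b \<Longrightarrow> y \<in> oiv a b \<Longrightarrow> x \<le> t \<Longrightarrow> t \<le> y \<Longrightarrow> t \<in> oiv a b"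
proof -
  assume "x \<in> oiv a b" "y \<in> oiv a b" "x \<le> t" "t \<le> y"
  then have "a < ereal x" "ereal x \<le> ereal t" "ereal t \<le> ereal y" "ereal y < b"
    unfolding oiv_def by auto
  then show ?thesis unfolding oiv_def using less_le_trans le_less_trans by blast
qed

lemma oiv_exhaust:
  assumes "a < b"
  obtains c d :: "nat \<Rightarrow> real" where "\<And>n. {c n..d n} \<subseteq> oiv a b"
    "\<And>x. x \<in> oiv a b \<Longrightarrow> eventually (\<lambda>n. x \<in> {c n..d n}) sequentially"
proof -
  define c where "c n = (case a of ereal r \<Rightarrow> r + 1 / real (Suc n) | _ \<Rightarrow> - real n)" for n
  define d where "d n = (case b of ereal r \<Rightarrow> r - 1 / real (Suc n) | _ \<Rightarrow> real n)" for n
  have a: "a \<noteq> \<infinity>" "b \<noteq> -\<infinity>" using assms by auto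
  have pos: "0 < 1 / real (Suc n)" for n by simp
  have c1: "a < ereal t" if "c n \<le> t" for n t
  proof (cases a)
    case (real r)
    then have "r + 1 / real (Suc n) \<le> t" using that by (simp add: c_def)
    then have "r < t" using pos[of n] by linarith
    then show ?thesis using real by simp
  qed (use a in auto)
  have d1: "ereal t < b" if "t \<le> d n" for n t
  proof (cases b)
    case (real r)
    then have "t \<le> r - 1 / real (Suc n)" using that by (simp add: d_def)
    then have "t < r" using pos[of n] by linarith
    then show ?thesis using real by simp
  qed (use a in auto)
  have lim0: "(\<lambda>n. 1 / real (Suc n)) \<longlonglongrightarrow> 0"
    using LIMSEQ_inverse_real_of_nat by (simp add: inverse_eq_divide)
  have ev1: "eventually (\<lambda>n. c n \<le> x) sequentially" if "a < ereal x" for x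
  proof (cases a)
    case (real r)
    then have "x - r > 0" using that by auto
    from order_tendstoD(2)[OF lim0 this] show ?thesis
      by eventually_elim (auto simp: c_def real)
  next
    case PInf then show ?thesis using a by auto
  next
    case MInf
    obtain N :: nat where "- x \<le> real N" using real_arch_simple by blast
    then have "eventually (\<lambda>n. n \<ge> N) sequentially" by (rule_tac eventually_ge_at_top)
    then show ?thesis
      by eventually_elim (use \<open>- x \<le> real N\<close> in \<open>auto simp: c_def MInf\<close>)
  qed
  have ev2: "eventually (\<lambda>n. x \<le> d n) sequentially" if "ereal x < b" for x
  proof (cases b)
    case (real r)
    then have "r - x > 0" using that by auto
    from order_tendstoD(2)[OF lim0 this] show ?thesis
      by eventually_elim (auto simp: d_def real)
  next
    case MInf then show ?thesis using a by auto
  next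
    case PInf
    obtain N :: nat where "x \<le> real N" using real_arch_simple by blast
    then have "eventually (\<lambda>n. n \<ge> N) sequentially" by (rule_tac eventually_ge_at_top)
    then show ?thesis
      by eventually_elim (use \<open>x \<le> real N\<close> in \<open>auto simp: d_def PInf\<close>)
  qed
  show ?thesis
  proof (rule that)
    show "{c n..d n} \<subseteq> oiv a b" for n
      using c1 d1 by (auto simp: oiv_def)
    show "eventually (\<lambda>n. x \<in> {c n..d n}) sequentially" if "x \<in> oiv a b" for x
      using ev1[of x] ev2[of x] that unfolding oiv_def
      by (auto elim: eventually_mono[OF eventually_conj])
  qed
qed

lemma loc_integrable_meas:
  assumes "a < b" "loc_integrable (oiv a b) f"
  shows "(\<lambda>x. indicator (oiv a b) x * f x) \<in> borel_measurable borel"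
proof -
  obtain c d where cd: "\<And>n. {c n..d n} \<subseteq> oiv a b"
    "\<And>x. x \<in> oiv a b \<Longrightarrow> eventually (\<lambda>n. x \<in> {c n..d n}) sequentially"
    using oiv_exhaust[OF assms(1)] by blast
  show ?thesis
  proof (rule borel_measurable_LIMSEQ_real)
    show "(\<lambda>n. indicator {c n..d n} x * f x) \<longlonglongrightarrow> indicator (oiv a b) x * f x" for x
    proof (cases "x \<in> oiv a b")
      case True
      have "eventually (\<lambda>n. indicator {c n..d n} x * f x = indicator (oiv a b) x * f x) sequentially"
        using cd(2)[OF True] by eventually_elim (use True in auto)
      then show ?thesis by (rule tendsto_eventually)
    next
      case False
      then have "x \<notin> {c n..d n}" for n using cd(1) by blast
      then show ?thesis using False by simp
    qed
    show "(\<lambda>x. indicator {c n..d n} x * f x) \<in> borel_measurable borel" for n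
    proof -
      have "set_integrable lborel {c n..d n} f" using assms(2) cd(1) unfolding loc_integrable_def by blast
      then have "(\<lambda>x. indicator {c n..d n} x *\<^sub>R f x) \<in> borel_measurable lborel"
        unfolding set_integrable_def by (rule borel_measurable_integrable)
      then show ?thesis by simp
    qed
  qed
qed

lemma oiv_nonnull:
  assumes "a < b"
  shows "\<not> (AE x in lborel. x \<in> oiv a b \<longrightarrow> False)"
proof
  assume ae: "AE x in lborel. x \<in> oiv a b \<longrightarrow> False"
  obtain x where x: "a < ereal x" "ereal x < b" using ereal_dense2[OF assms] by blast
  obtain y where y: "a < ereal y" "ereal y < ereal x" using ereal_dense2[OF x(1)] by blast
  have "y \<in> oiv a b" "x \<in> oiv a b" using x y less_trans[of "ereal y" "ereal x" b] unfolding oiv_def by auto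
  then have sub: "{y..x} \<subseteq> oiv a b" using oiv_between[of y a b x] by auto
  have "emeasure lborel (oiv a b) = 0"
    using ae by (subst (asm) AE_iff_measurable[OF _ refl]) auto
  then have "emeasure lborel {y..x} = 0"
    using emeasure_mono[OF sub, of lborel] by simp
  then show False using y by simp
qed



locale core =
  fixes a b :: ereal and p :: "real \<Rightarrow> real"
  assumes ab: "a < b"
    and p_meas[measurable]: "p \<in> borel_measurable borel"
    and p_nn: "\<And>x. 0 \<le> p x"
    and p_out: "\<And>x. x \<notin> oiv a b \<Longrightarrow> p x = 0"
    and p_int: "integrable lborel p"
    and p_one: "integral\<^sup>L lborel p = 1"
begin

lemma set_full: "(LINT x:oiv a b|lborel. f x * p x) = integral\<^sup>L lborel (\<lambda>x. f x * p x)"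
  unfolding set_lebesgue_integral_def
  by (rule Bochner_Integration.integral_cong) (auto simp: indicator_def p_out)

lemma Ep_full: "Ep a b p h = integral\<^sup>L lborel (\<lambda>x. h x * p x)"
  unfolding Ep_def by (rule set_full)

lemma Varp_full: "Varp a b p h = integral\<^sup>L lborel (\<lambda>x. (h x - Ep a b p h)\<^sup>2 * p x)"
  unfolding Varp_def by (rule set_full)

lemma hp_int:
  assumes [measurable]: "h \<in> borel_measurable borel" and hi: "integrable lborel (\<lambda>x. (h x)\<^sup>2 * p x)"
  shows "integrable lborel (\<lambda>x. h x * p x)"
proof (rule Bochner_Integration.integrable_bound[of _ "\<lambda>x. (h x)\<^sup>2 * p x + p x"])
  show "integrable lborel (\<lambda>x. (h x)\<^sup>2 * p x + p x)" using hi p_int by simp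
  show "AE x in lborel. norm (h x * p x) \<le> norm ((h x)\<^sup>2 * p x + p x)"
  proof (intro AE_I2)
    fix x
    have "\<bar>h x\<bar> \<le> (h x)\<^sup>2 + 1"
    proof (cases "\<bar>h x\<bar> \<le> 1")
      case False
      then have "\<bar>h x\<bar> * 1 \<le> \<bar>h x\<bar> * \<bar>h x\<bar>" by (intro mult_left_mono) auto
      then show ?thesis by (simp add: power2_eq_square)
    qed (simp add: add_increasing)
    then have "\<bar>h x\<bar> * p x \<le> ((h x)\<^sup>2 + 1) * p x" using p_nn[of x] by (rule mult_right_mono)
    then show "norm (h x * p x) \<le> norm ((h x)\<^sup>2 * p x + p x)"
      using p_nn[of x] by (simp add: abs_mult algebra_simps)
  qed
qed simp

lemma ennreal_half_cancel: "(x::ennreal) + x = y + y \<Longrightarrow> y \<noteq> \<infinity> \<Longrightarrow> x = y"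
  by (metis add_strict_mono antisym_conv3 order.strict_iff_not)

lemma var2:
  assumes hm[measurable]: "h \<in> borel_measurable borel" and hi: "integrable lborel (\<lambda>x. (h x)\<^sup>2 * p x)"
  shows "ennreal (Varp a b p h) =
    (\<integral>\<^sup>+x. \<integral>\<^sup>+y. ennreal (of_bool (y < x) * ((h y - h x)\<^sup>2 * p x * p y)) \<partial>lborel \<partial>lborel)"
proof -
  define E where "E = integral\<^sup>L lborel (\<lambda>x. h x * p x)"
  define M where "M = integral\<^sup>L lborel (\<lambda>x. (h x)\<^sup>2 * p x)"
  define V where "V = Varp a b p h"
  have hpi: "integrable lborel (\<lambda>x. h x * p x)" by (rule hp_int[OF hm hi])
  have V: "V = M - E\<^sup>2"
  proof -
    have "V = integral\<^sup>L lborel (\<lambda>x. (h x)\<^sup>2 * p x - 2 * E * (h x * p x) + E\<^sup>2 * p x)"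
      unfolding V_def Varp_full Ep_full E_def[symmetric]
      by (rule Bochner_Integration.integral_cong) (auto simp: power2_diff algebra_simps)
    also have "\<dots> = M - 2 * E * E + E\<^sup>2 * 1"
      using hi hpi p_int p_one by (simp add: M_def E_def)
    finally show ?thesis by (simp add: power2_eq_square)
  qed
  have V2: "V = integral\<^sup>L lborel (\<lambda>x. p x * (h x - E)\<^sup>2)"
    unfolding V_def Varp_full Ep_full E_def[symmetric] by (simp add: mult.commute)
  have inner: "integral\<^sup>L lborel (\<lambda>y. (h y - h x)\<^sup>2 * p y) = (h x - E)\<^sup>2 + V"
    and inner_int: "integrable lborel (\<lambda>y. (h y - h x)\<^sup>2 * p y)" for x
  proof -
    have eq: "(\<lambda>y. (h y - h x)\<^sup>2 * p y) = (\<lambda>y. (h y)\<^sup>2 * p y - 2 * h x * (h y * p y) + (h x)\<^sup>2 * p y)"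
      by (auto simp: power2_diff algebra_simps)
    show "integrable lborel (\<lambda>y. (h y - h x)\<^sup>2 * p y)"
      unfolding eq using hi hpi p_int by simp
    have "integral\<^sup>L lborel (\<lambda>y. (h y - h x)\<^sup>2 * p y) = M - 2 * h x * E + (h x)\<^sup>2 * 1"
      unfolding eq using hi hpi p_int p_one by (simp add: M_def E_def)
    then show "integral\<^sup>L lborel (\<lambda>y. (h y - h x)\<^sup>2 * p y) = (h x - E)\<^sup>2 + V"
      unfolding V by (simp add: power2_diff algebra_simps)
  qed
  define f where "f x y = (h y - h x)\<^sup>2 * p x * p y" for x y
  have f_meas[measurable]: "(\<lambda>(x, y). f x y) \<in> borel_measurable (lborel \<Otimes>\<^sub>M lborel)"
    unfolding f_def by measurable
  have f_nn: "0 \<le> f x y" for x y unfolding f_def using p_nn by simp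
  have f_sym: "f x y = f y x" for x y unfolding f_def by (simp add: power2_commute algebra_simps)
  have A_int: "integrable lborel (\<lambda>x. p x * (h x - E)\<^sup>2)"
    proof -
      have "(\<lambda>x. p x * (h x - E)\<^sup>2) = (\<lambda>x. (h x)\<^sup>2 * p x - 2 * E * (h x * p x) + E\<^sup>2 * p x)"
        by (auto simp: power2_diff algebra_simps)
      then show ?thesis using hi hpi p_int by simp
  qed
  have V_nn: "0 \<le> V" unfolding V2 by (rule integral_nonneg_AE) (simp add: p_nn)
  have T: "(\<integral>\<^sup>+x. \<integral>\<^sup>+y. ennreal (f x y) \<partial>lborel \<partial>lborel) = ennreal (V + V)"
  proof -
    have "(\<integral>\<^sup>+y. ennreal (f x y) \<partial>lborel) = ennreal (p x * ((h x - E)\<^sup>2 + V))" for x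
    proof -
      have "(\<integral>\<^sup>+y. ennreal (f x y) \<partial>lborel) = (\<integral>\<^sup>+y. ennreal (p x * ((h y - h x)\<^sup>2 * p y)) \<partial>lborel)"
        unfolding f_def by (simp add: mult_ac)
      also have "\<dots> = ennreal (integral\<^sup>L lborel (\<lambda>y. p x * ((h y - h x)\<^sup>2 * p y)))"
        by (rule nn_integral_eq_integral) (auto intro!: inner_int simp: p_nn)
      also have "\<dots> = ennreal (p x * ((h x - E)\<^sup>2 + V))" using inner by simp
      finally show ?thesis .
    qed
    then have "(\<integral>\<^sup>+x. \<integral>\<^sup>+y. ennreal (f x y) \<partial>lborel \<partial>lborel)
       = (\<integral>\<^sup>+x. ennreal (p x * (h x - E)\<^sup>2 + V * p x) \<partial>lborel)"
      by (simp add: algebra_simps)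
    also have "\<dots> = ennreal (integral\<^sup>L lborel (\<lambda>x. p x * (h x - E)\<^sup>2 + V * p x))"
    proof (rule nn_integral_eq_integral)
      show "integrable lborel (\<lambda>x. p x * (h x - E)\<^sup>2 + V * p x)" using A_int p_int by simp
      then show "AE x in lborel. 0 \<le> p x * (h x - E)\<^sup>2 + V * p x" using p_nn V_nn by simp
    qed
    also have "integral\<^sup>L lborel (\<lambda>x. p x * (h x - E)\<^sup>2 + V * p x) = V + V * 1"
      using A_int p_int p_one V2 by simp
    finally show ?thesis by simp
  qed
  define S where "S = (\<integral>\<^sup>+x. \<integral>\<^sup>+y. ennreal (of_bool (y < x) * f x y) \<partial>lborel \<partial>lborel)"
  have S2: "(\<integral>\<^sup>+x. \<integral>\<^sup>+y. ennreal (of_bool (x < y) * f x y) \<partial>lborel \<partial>lborel) = S"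
  proof -
    have "(\<integral>\<^sup>+x. \<integral>\<^sup>+y. ennreal (of_bool (x < y) * f x y) \<partial>lborel \<partial>lborel)
        = (\<integral>\<^sup>+y. \<integral>\<^sup>+x. ennreal (of_bool (x < y) * f x y) \<partial>lborel \<partial>lborel)"
      by (rule lborel_pair.Fubini'[symmetric]) measurable
    then show ?thesis unfolding S_def by (simp add: f_sym)
  qed
  have "(\<integral>\<^sup>+x. \<integral>\<^sup>+y. ennreal (f x y) \<partial>lborel \<partial>lborel)
     = (\<integral>\<^sup>+x. (\<integral>\<^sup>+y. ennreal (of_bool (y < x) * f x y) \<partial>lborel) + (\<integral>\<^sup>+y. ennreal (of_bool (x < y) * f x y) \<partial>lborel) \<partial>lborel)"
  proof (rule nn_integral_cong)
    fix x
    have "(\<integral>\<^sup>+y. ennreal (f x y) \<partial>lborel) = (\<integral>\<^sup>+y. ennreal (of_bool (y < x) * f x y) + ennreal (of_bool (x < y) * f x y) \<partial>lborel)"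
    proof (rule nn_integral_cong)
      fix y
      show "ennreal (f x y) = ennreal (of_bool (y < x) * f x y) + ennreal (of_bool (x < y) * f x y)"
        using f_nn[of x y] by (cases "y < x"; cases "x < y") (auto simp: f_def)
    qed
    also have "\<dots> = (\<integral>\<^sup>+y. ennreal (of_bool (y < x) * f x y) \<partial>lborel) + (\<integral>\<^sup>+y. ennreal (of_bool (x < y) * f x y) \<partial>lborel)"
      by (rule nn_integral_add) measurable
    finally show "(\<integral>\<^sup>+y. ennreal (f x y) \<partial>lborel) = \<dots>" .
  qed
  also have "\<dots> = S + (\<integral>\<^sup>+x. \<integral>\<^sup>+y. ennreal (of_bool (x < y) * f x y) \<partial>lborel \<partial>lborel)"
    unfolding S_def by (rule nn_integral_add) measurable
  also have "\<dots> = S + S" using S2 by simp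
  finally have "S + S = ennreal V + ennreal V"
    using T V_nn by (simp add: ennreal_plus[symmetric] del: ennreal_plus)
  then have "S = ennreal V" by (rule ennreal_half_cancel) simp
  then show ?thesis unfolding S_def V_def f_def by (simp add: mult.assoc)
qed

end


lemma ind_int: "A \<in> sets borel \<Longrightarrow> integrable lborel f \<Longrightarrow> integrable lborel (\<lambda>x. indicator A x * (f x :: real))"
  using integrable_mult_indicator[of A lborel f] by simp

context core begin

definition FF :: "(real \<Rightarrow> real) \<Rightarrow> real \<Rightarrow> real" where
  "FF h t = (LINT s:{s. a < ereal s \<and> s \<le> t}|lborel. (h s - Ep a b p h) * p s)"

lemma frep:
  assumes hm[measurable]: "h \<in> borel_measurable borel" and hpi: "integrable lborel (\<lambda>x. h x * p x)"
    and anti: "\<And>x y. x \<in> oiv a b \<Longrightarrow> y \<in> oiv a b \<Longrightarrow> x \<le> y \<Longrightarrow> h y \<le> h x"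
  shows "0 \<le> FF h t"
    and "ennreal (FF h t) = (\<integral>\<^sup>+x. \<integral>\<^sup>+y. ennreal (of_bool (y \<le> t \<and> t < x) * ((h y - h x) * p x * p y)) \<partial>lborel \<partial>lborel)"
proof -
  define E where "E = Ep a b p h"
  have E: "E = integral\<^sup>L lborel (\<lambda>x. h x * p x)" unfolding E_def Ep_full ..
  define A where "A = integral\<^sup>L lborel (\<lambda>y. indicator {..t} y * (h y * p y))"
  define B where "B = integral\<^sup>L lborel (\<lambda>y. indicator {t<..} y * (h y * p y))"
  define P where "P = integral\<^sup>L lborel (\<lambda>y. indicator {..t} y * p y)"
  define Q where "Q = integral\<^sup>L lborel (\<lambda>y. indicator {t<..} y * p y)"
  have iA: "integrable lborel (\<lambda>y. indicator {..t} y * (h y * p y))"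
    using hpi by (intro ind_int) auto
  have iB: "integrable lborel (\<lambda>y. indicator {t<..} y * (h y * p y))"
    using hpi by (intro ind_int) auto
  have iP: "integrable lborel (\<lambda>y. indicator {..t} y * p y)"
    using p_int by (intro ind_int) auto
  have iQ: "integrable lborel (\<lambda>y. indicator {t<..} y * p y)"
    using p_int by (intro ind_int) auto
  have split: "indicator {..t} y + indicator {t<..} y = (1::real)" for y
    by (auto simp: indicator_def)
  have EAB: "E = A + B"
  proof -
    have "E = integral\<^sup>L lborel (\<lambda>y. indicator {..t} y * (h y * p y) + indicator {t<..} y * (h y * p y))"
      unfolding E by (rule Bochner_Integration.integral_cong) (auto simp: indicator_def)
    then show ?thesis using iA iB by (simp add: A_def B_def)
  qed
  have PQ: "P + Q = 1"
  proof -
    have "1 = integral\<^sup>L lborel (\<lambda>y. indicator {..t} y * p y + indicator {t<..} y * p y)"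
      unfolding p_one[symmetric] by (rule Bochner_Integration.integral_cong) (auto simp: indicator_def)
    then show ?thesis using iP iQ by (simp add: P_def Q_def)
  qed
  have F: "FF h t = A - E * P"
  proof -
    have "FF h t = integral\<^sup>L lborel (\<lambda>s. indicator {..t} s * (h s * p s) - E * (indicator {..t} s * p s))"
      unfolding FF_def set_lebesgue_integral_def E_def[symmetric]
    proof (rule Bochner_Integration.integral_cong)
      fix s
      show "indicator {s. a < ereal s \<and> s \<le> t} s *\<^sub>R ((h s - E) * p s) =
         indicator {..t} s * (h s * p s) - E * (indicator {..t} s * p s)"
        using p_out[of s] by (auto simp: indicator_def oiv_def algebra_simps)
    qed simp
    then show ?thesis using iA iP by (simp add: A_def P_def)
  qed
  define J where "J x = A - h x * P" for x
  have J_int: "integrable lborel (\<lambda>y. indicator {..t} y * (p y * (h y - h x)))"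
   and J_eq: "integral\<^sup>L lborel (\<lambda>y. indicator {..t} y * (p y * (h y - h x))) = J x" for x
  proof -
    have eq: "(\<lambda>y. indicator {..t} y * (p y * (h y - h x))) = (\<lambda>y. indicator {..t} y * (h y * p y) - h x * (indicator {..t} y * p y))"
      by (auto simp: algebra_simps)
    show "integrable lborel (\<lambda>y. indicator {..t} y * (p y * (h y - h x)))"
      unfolding eq using iA iP by simp
    show "integral\<^sup>L lborel (\<lambda>y. indicator {..t} y * (p y * (h y - h x))) = J x"
      unfolding eq J_def using iA iP by (simp add: A_def P_def)
  qed
  define g where "g x y = of_bool (y \<le> t \<and> t < x) * ((h y - h x) * p x * p y)" for x y
  have g_nn: "0 \<le> g x y" for x y
  proof (cases "y \<le> t \<and> t < x \<and> x \<in> oiv a b \<and> y \<in> oiv a b")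
    case True
    then have "h x \<le> h y" using anti[of y x] by auto
    then show ?thesis unfolding g_def using p_nn[of x] p_nn[of y] by simp
  next
    case False
    then show ?thesis unfolding g_def using p_out[of x] p_out[of y] by auto
  qed
  have g_eq: "g x y = indicator {t<..} x * p x * (indicator {..t} y * (p y * (h y - h x)))" for x y
    unfolding g_def by (auto simp: indicator_def)
  define K where "K x = indicator {t<..} x * p x * J x" for x
  have K_int: "integrable lborel K"
  proof -
    have "K = (\<lambda>x. A * (indicator {t<..} x * p x) - P * (indicator {t<..} x * (h x * p x)))"
      unfolding K_def J_def by (auto simp: algebra_simps)
    then show ?thesis using iB iQ by simp
  qed
  have K_val: "integral\<^sup>L lborel K = FF h t"
  proof -
    have "K = (\<lambda>x. A * (indicator {t<..} x * p x) - P * (indicator {t<..} x * (h x * p x)))"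
      unfolding K_def J_def by (auto simp: algebra_simps)
    then have "integral\<^sup>L lborel K = A * Q - P * B"
      using iB iQ by (simp add: B_def Q_def)
    also have "\<dots> = FF h t"
    proof -
      have "A * Q - P * B = A * (P + Q) - (A + B) * P" by (simp add: algebra_simps)
      then show ?thesis unfolding F EAB PQ by simp
    qed
    finally show ?thesis .
  qed
  have inner: "(\<integral>\<^sup>+y. ennreal (g x y) \<partial>lborel) = ennreal (K x)" for x
  proof -
    have "(\<integral>\<^sup>+y. ennreal (g x y) \<partial>lborel) = ennreal (integral\<^sup>L lborel (g x))"
    proof (rule nn_integral_eq_integral)
      show "integrable lborel (g x)" unfolding g_eq[abs_def] using J_int[of x] by simp
    qed (simp add: g_nn)
    also have "integral\<^sup>L lborel (g x) = K x"
      unfolding g_eq[abs_def] K_def using J_eq[of x] by simp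
    finally show ?thesis .
  qed
  have K_nn: "0 \<le> K x" for x
  proof -
    have "0 \<le> integral\<^sup>L lborel (g x)" by (rule integral_nonneg_AE) (simp add: g_nn)
    also have "integral\<^sup>L lborel (g x) = K x"
      unfolding g_eq[abs_def] K_def using J_eq[of x] by simp
    finally show ?thesis .
  qed
  show "0 \<le> FF h t" unfolding K_val[symmetric] by (rule integral_nonneg_AE) (simp add: K_nn)
  have "(\<integral>\<^sup>+x. \<integral>\<^sup>+y. ennreal (g x y) \<partial>lborel \<partial>lborel) = (\<integral>\<^sup>+x. ennreal (K x) \<partial>lborel)"
    by (simp add: inner)
  also have "\<dots> = ennreal (FF h t)"
    unfolding K_val[symmetric] by (rule nn_integral_eq_integral) (auto simp: K_int K_nn)
  finally show "ennreal (FF h t) = (\<integral>\<^sup>+x. \<integral>\<^sup>+y. ennreal (of_bool (y \<le> t \<and> t < x) * ((h y - h x) * p x * p y)) \<partial>lborel \<partial>lborel)"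
    unfolding g_def by simp
qed

end


lemma swap3:
  fixes \<phi> :: "real \<Rightarrow> ennreal" and G :: "real \<Rightarrow> real \<Rightarrow> ennreal"
  assumes [measurable]: "\<phi> \<in> borel_measurable borel" "(\<lambda>(x, y). G x y) \<in> borel_measurable (lborel \<Otimes>\<^sub>M lborel)"
  shows "(\<integral>\<^sup>+t. \<phi> t * (\<integral>\<^sup>+x. \<integral>\<^sup>+y. of_bool (y \<le> t \<and> t < x) * G x y \<partial>lborel \<partial>lborel) \<partial>lborel)
    = (\<integral>\<^sup>+x. \<integral>\<^sup>+y. G x y * (\<integral>\<^sup>+t. of_bool (y \<le> t \<and> t < x) * \<phi> t \<partial>lborel) \<partial>lborel \<partial>lborel)"
proof -
  have "(\<integral>\<^sup>+t. \<phi> t * (\<integral>\<^sup>+x. \<integral>\<^sup>+y. of_bool (y \<le> t \<and> t < x) * G x y \<partial>lborel \<partial>lborel) \<partial>lborel)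
     = (\<integral>\<^sup>+t. \<integral>\<^sup>+x. \<integral>\<^sup>+y. \<phi> t * (of_bool (y \<le> t \<and> t < x) * G x y) \<partial>lborel \<partial>lborel \<partial>lborel)"
    by (simp add: nn_integral_cmult)
  also have "\<dots> = (\<integral>\<^sup>+x. \<integral>\<^sup>+t. \<integral>\<^sup>+y. \<phi> t * (of_bool (y \<le> t \<and> t < x) * G x y) \<partial>lborel \<partial>lborel \<partial>lborel)"
    by (rule lborel_pair.Fubini') measurable
  also have "\<dots> = (\<integral>\<^sup>+x. \<integral>\<^sup>+y. \<integral>\<^sup>+t. \<phi> t * (of_bool (y \<le> t \<and> t < x) * G x y) \<partial>lborel \<partial>lborel \<partial>lborel)"
    by (rule nn_integral_cong, rule lborel_pair.Fubini') measurable
  also have "\<dots> = (\<integral>\<^sup>+x. \<integral>\<^sup>+y. G x y * (\<integral>\<^sup>+t. of_bool (y \<le> t \<and> t < x) * \<phi> t \<partial>lborel) \<partial>lborel \<partial>lborel)"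
    by (simp add: nn_integral_cmult[symmetric] mult_ac)
  finally show ?thesis .
qed



lemma AE_half_open:
  fixes x y :: real
  shows "AE t in lborel. (of_bool (y \<le> t \<and> t < x) :: ennreal) = indicator {y..x} t"
  using AE_lborel_singleton[of x] by eventually_elim (auto simp: indicator_def)

lemma deriv_nn:
  fixes k :: "real \<Rightarrow> real"
  assumes [measurable]: "k \<in> borel_measurable borel" and knn: "\<And>t. 0 \<le> k t"
    and "set_integrable lborel {y..x} k"
    and hd: "h x - h y = (LINT t:{y..x}|lborel. - k t)"
  shows "(\<integral>\<^sup>+t. of_bool (y \<le> t \<and> t < x) * ennreal (k t) \<partial>lborel) = ennreal (h y - h x)"
proof -
  have "(\<integral>\<^sup>+t. of_bool (y \<le> t \<and> t < x) * ennreal (k t) \<partial>lborel) = (\<integral>\<^sup>+t. ennreal (indicator {y..x} t * k t) \<partial>lborel)"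
    by (rule nn_integral_cong_AE, use AE_half_open[of y x] in eventually_elim)
       (auto simp: indicator_def)
  also have "\<dots> = ennreal (integral\<^sup>L lborel (\<lambda>t. indicator {y..x} t * k t))"
    using assms(3) unfolding set_integrable_def
    by (intro nn_integral_eq_integral) (auto simp: knn)
  also have "integral\<^sup>L lborel (\<lambda>t. indicator {y..x} t * k t) = h y - h x"
    using hd unfolding set_lebesgue_integral_def by simp
  finally show ?thesis .
qed

lemma cs_step:
  fixes k g' :: "real \<Rightarrow> real"
  assumes [measurable]: "k \<in> borel_measurable borel" "g' \<in> borel_measurable borel"
    and knn: "\<And>t. 0 \<le> k t"
    and kpos: "AE t in lborel. y \<le> t \<and> t \<le> x \<longrightarrow> 0 < k t"
    and gi: "set_integrable lborel {y..x} g'"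
    and gd: "g x - g y = (LINT t:{y..x}|lborel. g' t)"
  shows "ennreal ((g y - g x)\<^sup>2) \<le> (\<integral>\<^sup>+t. of_bool (y \<le> t \<and> t < x) * ennreal ((g' t)\<^sup>2 / k t) \<partial>lborel)
     * (\<integral>\<^sup>+t. of_bool (y \<le> t \<and> t < x) * ennreal (k t) \<partial>lborel)"
proof -
  define F where "F t = of_bool (y \<le> t \<and> t < x) * ennreal (\<bar>g' t\<bar> / sqrt (k t))" for t
  define H where "H t = of_bool (y \<le> t \<and> t < x) * ennreal (sqrt (k t))" for t
  have [measurable]: "F \<in> borel_measurable lborel" "H \<in> borel_measurable lborel"
    unfolding F_def H_def by measurable
  have "\<bar>g x - g y\<bar> \<le> integral\<^sup>L lborel (\<lambda>t. norm (indicator {y..x} t *\<^sub>R g' t))"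
    using gd unfolding set_lebesgue_integral_def
    by (metis integral_norm_bound real_norm_def)
  also have "\<dots> = integral\<^sup>L lborel (\<lambda>t. indicator {y..x} t * \<bar>g' t\<bar>)"
    by (rule Bochner_Integration.integral_cong) (auto simp: indicator_def)
  finally have 1: "ennreal \<bar>g x - g y\<bar> \<le> ennreal (integral\<^sup>L lborel (\<lambda>t. indicator {y..x} t * \<bar>g' t\<bar>))"
    by (rule ennreal_leI)
  have "ennreal (integral\<^sup>L lborel (\<lambda>t. indicator {y..x} t * \<bar>g' t\<bar>)) = (\<integral>\<^sup>+t. ennreal (indicator {y..x} t * \<bar>g' t\<bar>) \<partial>lborel)"
  proof (rule nn_integral_eq_integral[symmetric])
    have "integrable lborel (\<lambda>t. norm (indicator {y..x} t *\<^sub>R g' t))"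
      using gi unfolding set_integrable_def by (rule integrable_norm)
    then show "integrable lborel (\<lambda>t. indicator {y..x} t * \<bar>g' t\<bar>)"
      by (rule Bochner_Integration.integrable_cong[THEN iffD1, rotated -1]) (auto simp: indicator_def)
  qed simp
  also have "\<dots> = (\<integral>\<^sup>+t. F t * H t \<partial>lborel)"
  proof (rule nn_integral_cong_AE)
    show "AE t in lborel. ennreal (indicator {y..x} t * \<bar>g' t\<bar>) = F t * H t"
      using kpos AE_lborel_singleton[of x]
    proof eventually_elim
      case (elim t)
      show ?case
      proof (cases "y \<le> t \<and> t < x")
        case True
        then have "0 < k t" using elim by auto
        then have "\<bar>g' t\<bar> / sqrt (k t) * sqrt (k t) = \<bar>g' t\<bar>" by simp
        then show ?thesis using True \<open>0 < k t\<close> unfolding F_def H_def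
          by (simp add: ennreal_mult[symmetric])
      next
        case False
        then show ?thesis using elim unfolding F_def H_def by (auto simp: indicator_def)
      qed
    qed
  qed
  finally have 2: "ennreal \<bar>g x - g y\<bar> \<le> (\<integral>\<^sup>+t. F t * H t \<partial>lborel)" using 1 by simp
  have "ennreal ((g y - g x)\<^sup>2) = ennreal (\<bar>g x - g y\<bar> ^ 2)"
    by (simp add: power2_commute)
  also have "\<dots> = (ennreal \<bar>g x - g y\<bar>)\<^sup>2"
    by (rule ennreal_power[symmetric]) simp
  also have "\<dots> \<le> (\<integral>\<^sup>+t. F t * H t \<partial>lborel)\<^sup>2"
    using 2 by (rule power_mono) simp
  also have "\<dots> \<le> (\<integral>\<^sup>+t. F t ^ 2 \<partial>lborel) * (\<integral>\<^sup>+t. H t ^ 2 \<partial>lborel)"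
    by (rule Cauchy_Schwarz_nn_integral) measurable
  also have "(\<integral>\<^sup>+t. F t ^ 2 \<partial>lborel) = (\<integral>\<^sup>+t. of_bool (y \<le> t \<and> t < x) * ennreal ((g' t)\<^sup>2 / k t) \<partial>lborel)"
  proof (rule nn_integral_cong)
    fix t
    have "(\<bar>g' t\<bar> / sqrt (k t))\<^sup>2 = (g' t)\<^sup>2 / k t"
      using knn[of t] by (simp add: power_divide)
    moreover have "(ennreal (\<bar>g' t\<bar> / sqrt (k t)))\<^sup>2 = ennreal ((\<bar>g' t\<bar> / sqrt (k t))\<^sup>2)"
      by (rule ennreal_power) (use knn[of t] in simp)
    ultimately show "F t ^ 2 = of_bool (y \<le> t \<and> t < x) * ennreal ((g' t)\<^sup>2 / k t)"
      unfolding F_def by (simp add: power_mult_distrib)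
  qed
  also have "(\<integral>\<^sup>+t. H t ^ 2 \<partial>lborel) = (\<integral>\<^sup>+t. of_bool (y \<le> t \<and> t < x) * ennreal (k t) \<partial>lborel)"
  proof (rule nn_integral_cong)
    fix t
    show "H t ^ 2 = of_bool (y \<le> t \<and> t < x) * ennreal (k t)"
      unfolding H_def using knn[of t] by (simp add: power_mult_distrib ennreal_power)
  qed
  finally show ?thesis .
qed



lemma ennreal_of_bool_mult: "ennreal (of_bool c * r) = of_bool c * ennreal r"
  by (cases c) auto

context core begin

lemma anti_from_deriv:
  fixes k :: "real \<Rightarrow> real"
  assumes knn: "\<And>t. 0 \<le> k t"
    and hd: "\<And>x y. x \<in> oiv a b \<Longrightarrow> y \<in> oiv a b \<Longrightarrow> y \<le> x \<Longrightarrow> h x - h y = (LINT t:{y..x}|lborel. - k t)"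
  shows "\<And>x y. x \<in> oiv a b \<Longrightarrow> y \<in> oiv a b \<Longrightarrow> x \<le> y \<Longrightarrow> h y \<le> h x"
proof -
  fix x y assume xy: "x \<in> oiv a b" "y \<in> oiv a b" "x \<le> y"
  have "0 \<le> (LINT t:{x..y}|lborel. k t)"
    unfolding set_lebesgue_integral_def by (rule integral_nonneg_AE) (simp add: knn)
  moreover have "(LINT t:{x..y}|lborel. - k t) = - (LINT t:{x..y}|lborel. k t)"
    unfolding set_lebesgue_integral_def by simp
  ultimately show "h y \<le> h x" using hd[OF xy(2,1,3)] by simp
qed

lemma claim1_core:
  fixes k h :: "real \<Rightarrow> real"
  assumes hm[measurable]: "h \<in> borel_measurable borel" and hi: "integrable lborel (\<lambda>x. (h x)\<^sup>2 * p x)"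
    and km[measurable]: "k \<in> borel_measurable borel" and knn: "\<And>t. 0 \<le> k t"
    and kint: "\<And>x y. x \<in> oiv a b \<Longrightarrow> y \<in> oiv a b \<Longrightarrow> y \<le> x \<Longrightarrow> set_integrable lborel {y..x} k"
    and hd: "\<And>x y. x \<in> oiv a b \<Longrightarrow> y \<in> oiv a b \<Longrightarrow> y \<le> x \<Longrightarrow> h x - h y = (LINT t:{y..x}|lborel. - k t)"
  shows "ennreal (Varp a b p h) = (\<integral>\<^sup>+t. ennreal (k t) * ennreal (FF h t) \<partial>lborel)"
proof -
  have anti: "\<And>x y. x \<in> oiv a b \<Longrightarrow> y \<in> oiv a b \<Longrightarrow> x \<le> y \<Longrightarrow> h y \<le> h x"
    by (rule anti_from_deriv[OF knn hd])
  have hpi: "integrable lborel (\<lambda>x. h x * p x)" by (rule hp_int[OF hm hi])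
  define G where "G x y = ennreal ((h y - h x) * p x * p y)" for x y
  have [measurable]: "(\<lambda>(x, y). G x y) \<in> borel_measurable (lborel \<Otimes>\<^sub>M lborel)"
    unfolding G_def by measurable
  have "(\<integral>\<^sup>+t. ennreal (k t) * ennreal (FF h t) \<partial>lborel)
     = (\<integral>\<^sup>+t. ennreal (k t) * (\<integral>\<^sup>+x. \<integral>\<^sup>+y. of_bool (y \<le> t \<and> t < x) * G x y \<partial>lborel \<partial>lborel) \<partial>lborel)"
  proof (rule nn_integral_cong)
    fix t show "ennreal (k t) * ennreal (FF h t) = ennreal (k t) * (\<integral>\<^sup>+x. \<integral>\<^sup>+y. of_bool (y \<le> t \<and> t < x) * G x y \<partial>lborel \<partial>lborel)"
      using frep(2)[OF hm hpi anti, of t] by (simp add: G_def ennreal_of_bool_mult)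
  qed
  also have "\<dots> = (\<integral>\<^sup>+x. \<integral>\<^sup>+y. G x y * (\<integral>\<^sup>+t. of_bool (y \<le> t \<and> t < x) * ennreal (k t) \<partial>lborel) \<partial>lborel \<partial>lborel)"
    by (rule swap3) measurable
  also have "\<dots> = (\<integral>\<^sup>+x. \<integral>\<^sup>+y. ennreal (of_bool (y < x) * ((h y - h x)\<^sup>2 * p x * p y)) \<partial>lborel \<partial>lborel)"
  proof (intro nn_integral_cong)
    fix x y
    show "G x y * (\<integral>\<^sup>+t. of_bool (y \<le> t \<and> t < x) * ennreal (k t) \<partial>lborel) =
          ennreal (of_bool (y < x) * ((h y - h x)\<^sup>2 * p x * p y))"
    proof (cases "x \<in> oiv a b \<and> y \<in> oiv a b \<and> y < x")
      case True
      then have "(\<integral>\<^sup>+t. of_bool (y \<le> t \<and> t < x) * ennreal (k t) \<partial>lborel) = ennreal (h y - h x)"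
        using kint[of x y] hd[of x y] by (intro deriv_nn) (auto simp: knn)
      moreover have "0 \<le> h y - h x" using anti[of y x] True by auto
      ultimately show ?thesis using True unfolding G_def
        by (simp add: ennreal_mult[symmetric] p_nn power2_eq_square mult_ac)
    next
      case False
      show ?thesis
      proof (cases "y < x")
        case True
        then have "p x = 0 \<or> p y = 0" using False p_out by auto
        then show ?thesis unfolding G_def by auto
      next
        case False
        then have "(\<integral>\<^sup>+t. of_bool (y \<le> t \<and> t < x) * ennreal (k t) \<partial>lborel) = 0"
        proof -
          have "(\<lambda>t. of_bool (y \<le> t \<and> t < x) * ennreal (k t)) = (\<lambda>t. 0)" using False by auto
          then show ?thesis by (simp only:) simp
        qed
        then show ?thesis using False by simp
      qed
    qed
  qed
  also have "\<dots> = ennreal (Varp a b p h)"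
    by (rule var2[OF hm hi, symmetric])
  finally show ?thesis ..
qed

lemma claim2_core:
  fixes k h g g' :: "real \<Rightarrow> real"
  assumes hm[measurable]: "h \<in> borel_measurable borel" and hpi: "integrable lborel (\<lambda>x. h x * p x)"
    and km[measurable]: "k \<in> borel_measurable borel" and knn: "\<And>t. 0 \<le> k t"
    and kpos: "AE t in lborel. t \<in> oiv a b \<longrightarrow> 0 < k t"
    and kint: "\<And>x y. x \<in> oiv a b \<Longrightarrow> y \<in> oiv a b \<Longrightarrow> y \<le> x \<Longrightarrow> set_integrable lborel {y..x} k"
    and hd: "\<And>x y. x \<in> oiv a b \<Longrightarrow> y \<in> oiv a b \<Longrightarrow> y \<le> x \<Longrightarrow> h x - h y = (LINT t:{y..x}|lborel. - k t)"
    and gm[measurable]: "g \<in> borel_measurable borel" and gi: "integrable lborel (\<lambda>x. (g x)\<^sup>2 * p x)"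
    and g'm[measurable]: "g' \<in> borel_measurable borel"
    and gint: "\<And>x y. x \<in> oiv a b \<Longrightarrow> y \<in> oiv a b \<Longrightarrow> y \<le> x \<Longrightarrow> set_integrable lborel {y..x} g'"
    and gd: "\<And>x y. x \<in> oiv a b \<Longrightarrow> y \<in> oiv a b \<Longrightarrow> y \<le> x \<Longrightarrow> g x - g y = (LINT t:{y..x}|lborel. g' t)"
  shows "ennreal (Varp a b p g) \<le> (\<integral>\<^sup>+t. ennreal ((g' t)\<^sup>2 / k t) * ennreal (FF h t) \<partial>lborel)"
proof -
  have anti: "\<And>x y. x \<in> oiv a b \<Longrightarrow> y \<in> oiv a b \<Longrightarrow> x \<le> y \<Longrightarrow> h y \<le> h x"
    by (rule anti_from_deriv[OF knn hd])
  define G where "G x y = ennreal ((h y - h x) * p x * p y)" for x y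
  have [measurable]: "(\<lambda>(x, y). G x y) \<in> borel_measurable (lborel \<Otimes>\<^sub>M lborel)"
    unfolding G_def by measurable
  define \<phi> where "\<phi> t = ennreal ((g' t)\<^sup>2 / k t)" for t
  have [measurable]: "\<phi> \<in> borel_measurable borel" unfolding \<phi>_def by measurable
  have "ennreal (Varp a b p g) = (\<integral>\<^sup>+x. \<integral>\<^sup>+y. ennreal (of_bool (y < x) * ((g y - g x)\<^sup>2 * p x * p y)) \<partial>lborel \<partial>lborel)"
    by (rule var2[OF gm gi])
  also have "\<dots> \<le> (\<integral>\<^sup>+x. \<integral>\<^sup>+y. G x y * (\<integral>\<^sup>+t. of_bool (y \<le> t \<and> t < x) * \<phi> t \<partial>lborel) \<partial>lborel \<partial>lborel)"
  proof (intro nn_integral_mono)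
    fix x y
    show "ennreal (of_bool (y < x) * ((g y - g x)\<^sup>2 * p x * p y)) \<le> G x y * (\<integral>\<^sup>+t. of_bool (y \<le> t \<and> t < x) * \<phi> t \<partial>lborel)"
    proof (cases "x \<in> oiv a b \<and> y \<in> oiv a b \<and> y < x")
      case True
      have kpos': "AE t in lborel. y \<le> t \<and> t \<le> x \<longrightarrow> 0 < k t"
        using kpos by eventually_elim (use True oiv_between[of y a b x] in auto)
      have "ennreal ((g y - g x)\<^sup>2) \<le> (\<integral>\<^sup>+t. of_bool (y \<le> t \<and> t < x) * \<phi> t \<partial>lborel)
          * (\<integral>\<^sup>+t. of_bool (y \<le> t \<and> t < x) * ennreal (k t) \<partial>lborel)"
        unfolding \<phi>_def using True
        by (intro cs_step[where g=g] kpos' gint gd) (auto simp: knn)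
      also have "(\<integral>\<^sup>+t. of_bool (y \<le> t \<and> t < x) * ennreal (k t) \<partial>lborel) = ennreal (h y - h x)"
        using True kint[of x y] hd[of x y] by (intro deriv_nn) (auto simp: knn)
      finally have 1: "ennreal ((g y - g x)\<^sup>2) \<le> (\<integral>\<^sup>+t. of_bool (y \<le> t \<and> t < x) * \<phi> t \<partial>lborel) * ennreal (h y - h x)" .
      have "0 \<le> h y - h x" using anti[of y x] True by auto
      have "ennreal (of_bool (y < x) * ((g y - g x)\<^sup>2 * p x * p y)) = ennreal ((g y - g x)\<^sup>2) * ennreal (p x * p y)"
        using True by (simp add: ennreal_mult[symmetric] p_nn mult_ac)
      also have "\<dots> \<le> (\<integral>\<^sup>+t. of_bool (y \<le> t \<and> t < x) * \<phi> t \<partial>lborel) * ennreal (h y - h x) * ennreal (p x * p y)"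
        using 1 by (rule mult_right_mono) simp
      also have "\<dots> = G x y * (\<integral>\<^sup>+t. of_bool (y \<le> t \<and> t < x) * \<phi> t \<partial>lborel)"
      proof -
        have "G x y = ennreal (h y - h x) * ennreal (p x * p y)"
          unfolding G_def using \<open>0 \<le> h y - h x\<close> by (simp add: ennreal_mult' mult.assoc)
        then show ?thesis by (simp add: mult_ac)
      qed
      finally show ?thesis .
    next
      case False
      then have "of_bool (y < x) * ((g y - g x)\<^sup>2 * p x * p y) = 0" using p_out by auto
      then show ?thesis by (metis ennreal_0 zero_le)
    qed
  qed
  also have "\<dots> = (\<integral>\<^sup>+t. \<phi> t * (\<integral>\<^sup>+x. \<integral>\<^sup>+y. of_bool (y \<le> t \<and> t < x) * G x y \<partial>lborel \<partial>lborel) \<partial>lborel)"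
    by (rule swap3[symmetric]) measurable
  also have "\<dots> = (\<integral>\<^sup>+t. ennreal ((g' t)\<^sup>2 / k t) * ennreal (FF h t) \<partial>lborel)"
  proof (rule nn_integral_cong)
    fix t show "\<phi> t * (\<integral>\<^sup>+x. \<integral>\<^sup>+y. of_bool (y \<le> t \<and> t < x) * G x y \<partial>lborel \<partial>lborel) = ennreal ((g' t)\<^sup>2 / k t) * ennreal (FF h t)"
      using frep(2)[OF hm hpi anti, of t] by (simp add: G_def ennreal_of_bool_mult \<phi>_def)
  qed
  finally show ?thesis .
qed

end



lemma ind_mult: "indicator S x * (f x * g x) = (indicator S x * f x) * (indicator S x * (g x :: real))"
  by (simp add: indicator_def)

lemma lint_cong_I:
  fixes f g :: "real \<Rightarrow> real"
  assumes [measurable]: "S \<in> sets borel" and sub: "S \<subseteq> oiv a b"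
    and fm[measurable]: "(\<lambda>x. indicator (oiv a b) x * f x) \<in> borel_measurable borel"
    and gm[measurable]: "(\<lambda>x. indicator (oiv a b) x * g x) \<in> borel_measurable borel"
    and ae: "AE x in lborel. x \<in> oiv a b \<longrightarrow> f x = g x"
  shows "(LINT x:S|lborel. f x) = (LINT x:S|lborel. g x)"
    and "set_integrable lborel S f = set_integrable lborel S g"
proof -
  have e1: "(\<lambda>x. indicator S x *\<^sub>R f x) = (\<lambda>x. indicator S x * (indicator (oiv a b) x * f x))"
    using sub by (intro ext) (auto simp: indicator_def)
  have e2: "(\<lambda>x. indicator S x *\<^sub>R g x) = (\<lambda>x. indicator S x * (indicator (oiv a b) x * g x))"
    using sub by (intro ext) (auto simp: indicator_def)
  have m1: "(\<lambda>x. indicator S x *\<^sub>R f x) \<in> borel_measurable lborel" unfolding e1 by measurable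
  have m2: "(\<lambda>x. indicator S x *\<^sub>R g x) \<in> borel_measurable lborel" unfolding e2 by measurable
  have ae': "AE x in lborel. indicator S x *\<^sub>R f x = indicator S x *\<^sub>R g x"
    using ae by eventually_elim (use sub in \<open>auto simp: indicator_def\<close>)
  show "(LINT x:S|lborel. f x) = (LINT x:S|lborel. g x)"
    unfolding set_lebesgue_integral_def by (rule integral_cong_AE[OF m1 m2 ae'])
  show "set_integrable lborel S f = set_integrable lborel S g"
    unfolding set_integrable_def by (rule integrable_cong_AE[OF m1 m2 ae'])
qed

lemma restrict_meas:
  fixes h :: "real \<Rightarrow> real"
  assumes "h \<in> borel_measurable (restrict_space lborel (oiv a b))"
  shows "(\<lambda>x. indicator (oiv a b) x * h x) \<in> borel_measurable borel"
proof -
  have "(\<lambda>x. indicator (oiv a b) x *\<^sub>R h x) \<in> borel_measurable lborel"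
    using assms borel_measurable_restrict_space_iff[of "oiv a b" lborel h] by simp
  then show ?thesis by simp
qed

locale wsetting =
  fixes a b :: ereal and p w :: "real \<Rightarrow> real"
  assumes ab: "a < b" and dens: "is_density a b p" and wt: "is_weight a b p w"
begin

definition "p0 x = max 0 (indicator (oiv a b) x * p x)"
definition "w0 x = max 0 (indicator (oiv a b) x * w x)"

lemma pI_meas[measurable]: "(\<lambda>x. indicator (oiv a b) x * p x) \<in> borel_measurable borel"
proof -
  have "set_integrable lborel (oiv a b) p" using dens unfolding is_density_def by blast
  then have "(\<lambda>x. indicator (oiv a b) x *\<^sub>R p x) \<in> borel_measurable lborel"
    unfolding set_integrable_def by (rule borel_measurable_integrable)
  then show ?thesis by simp
qed

lemma wI_meas[measurable]: "(\<lambda>x. indicator (oiv a b) x * w x) \<in> borel_measurable borel"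
  using loc_integrable_meas[OF ab] wt unfolding is_weight_def by blast

lemma p0_meas[measurable]: "p0 \<in> borel_measurable borel"
  unfolding p0_def[abs_def] by measurable

lemma w0_meas[measurable]: "w0 \<in> borel_measurable borel"
  unfolding w0_def[abs_def] by measurable

lemma p_pos: "AE x in lborel. x \<in> oiv a b \<longrightarrow> 0 < p x"
  using dens unfolding is_density_def by blast

lemma w_pos: "AE x in lborel. x \<in> oiv a b \<longrightarrow> 0 < w x"
  using wt unfolding is_weight_def by blast

lemma p0_ae: "AE x in lborel. x \<in> oiv a b \<longrightarrow> p0 x = p x"
  using p_pos by eventually_elim (auto simp: p0_def)

lemma w0_ae: "AE x in lborel. x \<in> oiv a b \<longrightarrow> w0 x = w x"
  using w_pos by eventually_elim (auto simp: w0_def)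

lemma p0_int: "integrable lborel p0" and p0_one: "integral\<^sup>L lborel p0 = 1"
proof -
  have si: "set_integrable lborel (oiv a b) p" and one: "(LINT x:oiv a b|lborel. p x) = 1"
    using dens unfolding is_density_def by blast+
  have ae: "AE x in lborel. p0 x = indicator (oiv a b) x *\<^sub>R p x"
    using p_pos by eventually_elim (auto simp: p0_def indicator_def)
  show "integrable lborel p0"
    using si unfolding set_integrable_def by (rule integrable_cong_AE[THEN iffD2, rotated -1]) (use ae in auto)
  show "integral\<^sup>L lborel p0 = 1"
    using one unfolding set_lebesgue_integral_def using integral_cong_AE[OF _ _ ae] by simp
qed

sublocale core a b p0
proof
  show "a < b" by (rule ab)
  show "p0 \<in> borel_measurable borel" by (rule p0_meas)
  show "0 \<le> p0 x" for x by (simp add: p0_def)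
  show "x \<notin> oiv a b \<Longrightarrow> p0 x = 0" for x by (simp add: p0_def)
  show "integrable lborel p0" by (rule p0_int)
  show "integral\<^sup>L lborel p0 = 1" by (rule p0_one)
qed

end


lemma set_int_full:
  fixes f :: "real \<Rightarrow> real"
  assumes "\<And>x. x \<notin> S \<Longrightarrow> f x = 0" "set_integrable lborel S f"
  shows "integrable lborel f"
proof -
  have "(\<lambda>x. indicator S x *\<^sub>R f x) = f" using assms(1) by (intro ext) (auto simp: indicator_def)
  then show ?thesis using assms(2) unfolding set_integrable_def by simp
qed

lemma Sle_sets[measurable]: "{s. a < ereal s \<and> s \<le> t} \<in> sets borel"
  by measurable

lemma Sle_sub: "t \<in> oiv a b \<Longrightarrow> {s. a < ereal s \<and> s \<le> t} \<subseteq> oiv a b"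
  unfolding oiv_def using le_less_trans[of "ereal _" "ereal t" b] by auto

context wsetting begin

lemma Ep_transfer:
  assumes [measurable]: "(\<lambda>x. indicator (oiv a b) x * h x) \<in> borel_measurable borel"
  shows "Ep a b p h = Ep a b p0 (\<lambda>x. indicator (oiv a b) x * h x)"
  unfolding Ep_def
proof (rule lint_cong_I(1)[where a=a and b=b])
  show "(\<lambda>x. indicator (oiv a b) x * (h x * p x)) \<in> borel_measurable borel"
    unfolding ind_mult by measurable
  show "(\<lambda>x. indicator (oiv a b) x * (indicator (oiv a b) x * h x * p0 x)) \<in> borel_measurable borel"
    by measurable
  show "AE x in lborel. x \<in> oiv a b \<longrightarrow> h x * p x = indicator (oiv a b) x * h x * p0 x"
    using p0_ae by eventually_elim auto
qed auto

lemma FF_transfer: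
  assumes [measurable]: "(\<lambda>x. indicator (oiv a b) x * h x) \<in> borel_measurable borel"
    and t: "t \<in> oiv a b"
  shows "(LINT s:{s. a < ereal s \<and> s \<le> t}|lborel. (h s - Ep a b p h) * p s) = FF (\<lambda>x. indicator (oiv a b) x * h x) t"
  unfolding FF_def Ep_transfer[OF assms(1)]
proof (rule lint_cong_I(1)[where a=a and b=b])
  define E where "E = Ep a b p0 (\<lambda>x. indicator (oiv a b) x * h x)"
  have eq: "(\<lambda>s. indicator (oiv a b) s * ((h s - E) * p s)) = (\<lambda>s. (indicator (oiv a b) s * h s - E * indicator (oiv a b) s) * (indicator (oiv a b) s * p s))"
    by (intro ext) (auto simp: indicator_def)
  show "(\<lambda>x. indicator (oiv a b) x * ((h x - E) * p x)) \<in> borel_measurable borel"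
    unfolding eq by measurable
  show "(\<lambda>x. indicator (oiv a b) x * ((indicator (oiv a b) x * h x - E) * p0 x)) \<in> borel_measurable borel"
    by measurable
  show "AE x in lborel. x \<in> oiv a b \<longrightarrow> (h x - E) * p x = (indicator (oiv a b) x * h x - E) * p0 x"
    using p0_ae by eventually_elim auto
qed (auto simp: Sle_sub[OF t])

lemma Varp_transfer:
  assumes [measurable]: "(\<lambda>x. indicator (oiv a b) x * h x) \<in> borel_measurable borel"
  shows "Varp a b p h = Varp a b p0 (\<lambda>x. indicator (oiv a b) x * h x)"
  unfolding Varp_def Ep_transfer[OF assms(1)]
proof (rule lint_cong_I(1)[where a=a and b=b])
  define E where "E = Ep a b p0 (\<lambda>x. indicator (oiv a b) x * h x)"
  have eq: "(\<lambda>s. indicator (oiv a b) s * ((h s - E)\<^sup>2 * p s)) = (\<lambda>s. (indicator (oiv a b) s * h s - E * indicator (oiv a b) s)\<^sup>2 * (indicator (oiv a b) s * p s))"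
    by (intro ext) (auto simp: indicator_def)
  show "(\<lambda>x. indicator (oiv a b) x * ((h x - E)\<^sup>2 * p x)) \<in> borel_measurable borel"
    unfolding eq by measurable
  show "(\<lambda>x. indicator (oiv a b) x * ((indicator (oiv a b) x * h x - E)\<^sup>2 * p0 x)) \<in> borel_measurable borel"
    by measurable
  show "AE x in lborel. x \<in> oiv a b \<longrightarrow> (h x - E)\<^sup>2 * p x = (indicator (oiv a b) x * h x - E)\<^sup>2 * p0 x"
    using p0_ae by eventually_elim auto
qed auto

lemma L2_transfer:
  assumes "in_L2 a b p h"
  shows "(\<lambda>x. indicator (oiv a b) x * h x) \<in> borel_measurable borel"
    and "integrable lborel (\<lambda>x. (indicator (oiv a b) x * h x)\<^sup>2 * p0 x)"
proof -
  show hm[measurable]: "(\<lambda>x. indicator (oiv a b) x * h x) \<in> borel_measurable borel"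
    using assms unfolding in_L2_def by (intro restrict_meas) blast
  have "set_integrable lborel (oiv a b) (\<lambda>x. (h x)\<^sup>2 * p x)" using assms unfolding in_L2_def by blast
  moreover have "set_integrable lborel (oiv a b) (\<lambda>x. (h x)\<^sup>2 * p x) = set_integrable lborel (oiv a b) (\<lambda>x. (indicator (oiv a b) x * h x)\<^sup>2 * p0 x)"
  proof (rule lint_cong_I(2)[where a=a and b=b])
    have eq: "(\<lambda>s. indicator (oiv a b) s * ((h s)\<^sup>2 * p s)) = (\<lambda>s. (indicator (oiv a b) s * h s)\<^sup>2 * (indicator (oiv a b) s * p s))"
      by (intro ext) (auto simp: indicator_def)
    show "(\<lambda>x. indicator (oiv a b) x * ((h x)\<^sup>2 * p x)) \<in> borel_measurable borel"
      unfolding eq by measurable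
    show "(\<lambda>x. indicator (oiv a b) x * ((indicator (oiv a b) x * h x)\<^sup>2 * p0 x)) \<in> borel_measurable borel"
      by measurable
    show "AE x in lborel. x \<in> oiv a b \<longrightarrow> (h x)\<^sup>2 * p x = (indicator (oiv a b) x * h x)\<^sup>2 * p0 x"
      using p0_ae by eventually_elim auto
  qed auto
  ultimately show "integrable lborel (\<lambda>x. (indicator (oiv a b) x * h x)\<^sup>2 * p0 x)"
    by (intro set_int_full[where S="oiv a b"]) (auto simp: p0_def)
qed

lemma deriv_data:
  assumes wd: "weak_deriv (oiv a b) h h'" and neg: "AE x in lborel. x \<in> oiv a b \<longrightarrow> h' x < 0"
  defines "k \<equiv> \<lambda>x. indicator (oiv a b) x * max 0 (- h' x)"
  shows "k \<in> borel_measurable borel" "\<And>t. 0 \<le> k t"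
    "AE t in lborel. t \<in> oiv a b \<longrightarrow> 0 < k t \<and> k t = - h' t"
    "\<And>x y. x \<in> oiv a b \<Longrightarrow> y \<in> oiv a b \<Longrightarrow> y \<le> x \<Longrightarrow> set_integrable lborel {y..x} k"
    "\<And>x y. x \<in> oiv a b \<Longrightarrow> y \<in> oiv a b \<Longrightarrow> y \<le> x \<Longrightarrow>
        (\<lambda>x. indicator (oiv a b) x * h x) x - (\<lambda>x. indicator (oiv a b) x * h x) y = (LINT t:{y..x}|lborel. - k t)"
    "(\<lambda>x. indicator (oiv a b) x * h x) \<in> borel_measurable borel"
    "(\<lambda>x. indicator (oiv a b) x * h' x) \<in> borel_measurable borel"
proof -
  have li: "loc_integrable (oiv a b) h'" and hd: "\<And>x y. x \<in> oiv a b \<Longrightarrow> y \<in> oiv a b \<Longrightarrow> x \<le> y \<Longrightarrow> h y - h x = (LINT t:{x..y}|lborel. h' t)"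
    using wd unfolding weak_deriv_def by blast+
  show h'm[measurable]: "(\<lambda>x. indicator (oiv a b) x * h' x) \<in> borel_measurable borel"
    by (rule loc_integrable_meas[OF ab li])
  have keq: "k = (\<lambda>x. max 0 (- (indicator (oiv a b) x * h' x)))"
    unfolding k_def by (intro ext) (auto simp: indicator_def)
  show km[measurable]: "k \<in> borel_measurable borel" unfolding keq by measurable
  show knn: "0 \<le> k t" for t unfolding k_def by simp
  show kae: "AE t in lborel. t \<in> oiv a b \<longrightarrow> 0 < k t \<and> k t = - h' t"
    using neg by eventually_elim (auto simp: k_def)
  have kae': "AE t in lborel. t \<in> oiv a b \<longrightarrow> h' t = - k t"
    using kae by eventually_elim auto
  have mk: "(\<lambda>x. indicator (oiv a b) x * - k x) \<in> borel_measurable borel" by measurable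
  have mk2: "(\<lambda>x. indicator (oiv a b) x * k x) \<in> borel_measurable borel" by measurable
  have mh2: "(\<lambda>x. indicator (oiv a b) x * - h' x) \<in> borel_measurable borel"
  proof -
    have "(\<lambda>x. indicator (oiv a b) x * - h' x) = (\<lambda>x. - (indicator (oiv a b) x * h' x))" by auto
    then show ?thesis by simp
  qed
  show "set_integrable lborel {y..x} k" if xy: "x \<in> oiv a b" "y \<in> oiv a b" "y \<le> x" for x y
  proof -
    have sub: "{y..x} \<subseteq> oiv a b" using oiv_between[OF xy(2,1)] by auto
    then have "set_integrable lborel {y..x} h'" using li unfolding loc_integrable_def by blast
    then have "set_integrable lborel {y..x} (\<lambda>t. - h' t)"
      by (simp add: set_integrable_def)
    moreover have "set_integrable lborel {y..x} (\<lambda>t. - h' t) = set_integrable lborel {y..x} k"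
      by (rule lint_cong_I(2)[OF _ sub mh2 mk2]) (use kae in \<open>auto elim!: eventually_mono\<close>)
    ultimately show ?thesis by simp
  qed
  show "(\<lambda>x. indicator (oiv a b) x * h x) x - (\<lambda>x. indicator (oiv a b) x * h x) y = (LINT t:{y..x}|lborel. - k t)"
    if xy: "x \<in> oiv a b" "y \<in> oiv a b" "y \<le> x" for x y
  proof -
    have sub: "{y..x} \<subseteq> oiv a b" using oiv_between[OF xy(2,1)] by auto
    have "(LINT t:{y..x}|lborel. h' t) = (LINT t:{y..x}|lborel. - k t)"
      by (rule lint_cong_I(1)[OF _ sub h'm mk kae']) simp
    then show ?thesis using hd[OF xy(2,1,3)] xy by simp
  qed
  then have anti: "\<And>x y. x \<in> oiv a b \<Longrightarrow> y \<in> oiv a b \<Longrightarrow> x \<le> y \<Longrightarrow>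
      (\<lambda>x. indicator (oiv a b) x * h x) y \<le> (\<lambda>x. indicator (oiv a b) x * h x) x"
    by (rule anti_from_deriv[OF knn])
  have "mono_on (oiv a b) (\<lambda>x. - h x)"
    by (rule mono_onI) (use anti in auto)
  then have "(\<lambda>x. - h x) \<in> borel_measurable (restrict_space borel (oiv a b))"
    by (rule borel_measurable_mono_on_fnc)
  then have "(\<lambda>x. - (- h x)) \<in> borel_measurable (restrict_space borel (oiv a b))"
    by measurable
  then have "h \<in> borel_measurable (restrict_space borel (oiv a b))" by simp
  then have "(\<lambda>x. indicator (oiv a b) x *\<^sub>R h x) \<in> borel_measurable borel"
    using borel_measurable_restrict_space_iff[of "oiv a b" borel h] by simp
  then show "(\<lambda>x. indicator (oiv a b) x * h x) \<in> borel_measurable borel" by simp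
qed

end


context wsetting begin

lemma L1_transfer:
  assumes [measurable]: "(\<lambda>x. indicator (oiv a b) x * h x) \<in> borel_measurable borel"
  shows "in_L1 a b p h \<longleftrightarrow> integrable lborel (\<lambda>x. (indicator (oiv a b) x * h x) * p0 x)"
proof -
  have "set_integrable lborel (oiv a b) (\<lambda>x. h x * p x) = set_integrable lborel (oiv a b) (\<lambda>x. (indicator (oiv a b) x * h x) * p0 x)"
  proof (rule lint_cong_I(2)[where a=a and b=b])
    show "(\<lambda>x. indicator (oiv a b) x * (h x * p x)) \<in> borel_measurable borel"
      unfolding ind_mult by measurable
    show "(\<lambda>x. indicator (oiv a b) x * (indicator (oiv a b) x * h x * p0 x)) \<in> borel_measurable borel"
      by measurable
    show "AE x in lborel. x \<in> oiv a b \<longrightarrow> h x * p x = indicator (oiv a b) x * h x * p0 x"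
      using p0_ae by eventually_elim auto
  qed auto
  moreover have "(\<lambda>x. indicator (oiv a b) x *\<^sub>R ((indicator (oiv a b) x * h x) * p0 x)) = (\<lambda>x. (indicator (oiv a b) x * h x) * p0 x)"
    by (intro ext) (auto simp: indicator_def)
  ultimately show ?thesis unfolding in_L1_def set_integrable_def by simp
qed

lemma L2_L1: "in_L2 a b p h \<Longrightarrow> in_L1 a b p h"
  using L1_transfer[OF L2_transfer(1)] hp_int[OF L2_transfer(1) L2_transfer(2)] by blast

lemma B1:
  assumes L2: "in_L2 a b p h" and wd: "weak_deriv (oiv a b) h h'" and neg: "AE x in lborel. x \<in> oiv a b \<longrightarrow> h' x < 0"
  shows "ennreal (Varp a b p h) = (\<integral>\<^sup>+t. ennreal (- Tt a b p h t / (h' t * w t)) * ennreal ((h' t)\<^sup>2 * w t * p t) * indicator (oiv a b) t \<partial>lborel)"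
proof -
  define k where "k x = indicator (oiv a b) x * max 0 (- h' x)" for x
  define h0 where "h0 x = indicator (oiv a b) x * h x" for x
  note dd = deriv_data[OF wd neg, folded k_def h0_def]
  note [measurable] = dd(1) dd(6)
  have hi: "integrable lborel (\<lambda>x. (h0 x)\<^sup>2 * p0 x)" unfolding h0_def by (rule L2_transfer(2)[OF L2])
  have "ennreal (Varp a b p h) = ennreal (Varp a b p0 h0)"
    unfolding h0_def by (subst Varp_transfer[OF dd(6)[unfolded h0_def]]) simp
  also have "\<dots> = (\<integral>\<^sup>+t. ennreal (k t) * ennreal (FF h0 t) \<partial>lborel)"
    by (rule claim1_core[OF dd(6) hi dd(1) dd(2) dd(4) dd(5)])
  also have "\<dots> = (\<integral>\<^sup>+t. ennreal (- Tt a b p h t / (h' t * w t)) * ennreal ((h' t)\<^sup>2 * w t * p t) * indicator (oiv a b) t \<partial>lborel)"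
  proof (rule nn_integral_cong_AE)
    show "AE t in lborel. ennreal (k t) * ennreal (FF h0 t) = ennreal (- Tt a b p h t / (h' t * w t)) * ennreal ((h' t)\<^sup>2 * w t * p t) * indicator (oiv a b) t"
      using dd(3) p_pos w_pos
    proof eventually_elim
      case (elim t)
      show ?case
      proof (cases "t \<in> oiv a b")
        case True
        then have kt: "0 < k t" "k t = - h' t" and pt: "0 < p t" and wt': "0 < w t" using elim by auto
        have T: "Tt a b p h t = 1 / p t * FF h0 t"
          unfolding Tt_def h0_def using FF_transfer[OF dd(6)[unfolded h0_def] True] by simp
        have "- Tt a b p h t / (h' t * w t) * ((h' t)\<^sup>2 * w t * p t) = k t * FF h0 t"
          unfolding T using kt pt wt' by (simp add: field_simps power2_eq_square)
        moreover have "0 \<le> (h' t)\<^sup>2 * w t * p t" using pt wt' by simp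
        ultimately show ?thesis using True kt
          by (simp add: ennreal_mult''[symmetric] ennreal_mult'[symmetric])
      next
        case False
        then show ?thesis by (simp add: k_def)
      qed
    qed
  qed
  finally show ?thesis .
qed

lemma B2:
  assumes L1: "in_L1 a b p h" and wd: "weak_deriv (oiv a b) h h'" and neg: "AE x in lborel. x \<in> oiv a b \<longrightarrow> h' x < 0"
    and H1: "in_H1 a b p w g g'"
  shows "ennreal (Varp a b p g) \<le> (\<integral>\<^sup>+t. ennreal (- Tt a b p h t / (h' t * w t)) * ennreal ((g' t)\<^sup>2 * w t * p t) * indicator (oiv a b) t \<partial>lborel)"
proof -
  define k where "k x = indicator (oiv a b) x * max 0 (- h' x)" for x
  define h0 where "h0 x = indicator (oiv a b) x * h x" for x
  define g0 where "g0 x = indicator (oiv a b) x * g x" for x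
  define g0' where "g0' x = indicator (oiv a b) x * g' x" for x
  note dd = deriv_data[OF wd neg, folded k_def h0_def]
  note [measurable] = dd(1) dd(6)
  have hpi: "integrable lborel (\<lambda>x. h0 x * p0 x)" using L1 L1_transfer[OF dd(6)[unfolded h0_def]] h0_def by simp
  have gL2: "in_L2 a b p g" and gwd: "weak_deriv (oiv a b) g g'" using H1 unfolding in_H1_def by blast+
  have g0m[measurable]: "g0 \<in> borel_measurable borel" unfolding g0_def by (rule L2_transfer(1)[OF gL2])
  have gi: "integrable lborel (\<lambda>x. (g0 x)\<^sup>2 * p0 x)" unfolding g0_def by (rule L2_transfer(2)[OF gL2])
  have li: "loc_integrable (oiv a b) g'" and gd: "\<And>x y. x \<in> oiv a b \<Longrightarrow> y \<in> oiv a b \<Longrightarrow> x \<le> y \<Longrightarrow> g y - g x = (LINT t:{x..y}|lborel. g' t)"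
    using gwd unfolding weak_deriv_def by blast+
  have g0'm[measurable]: "g0' \<in> borel_measurable borel" unfolding g0'_def by (rule loc_integrable_meas[OF ab li])
  have g0'I: "(\<lambda>x. indicator (oiv a b) x * g0' x) \<in> borel_measurable borel" by measurable
  have gae: "AE x in lborel. x \<in> oiv a b \<longrightarrow> g' x = g0' x" by (simp add: g0'_def)
  have gint: "set_integrable lborel {y..x} g0'" if xy: "x \<in> oiv a b" "y \<in> oiv a b" "y \<le> x" for x y
  proof -
    have sub: "{y..x} \<subseteq> oiv a b" using oiv_between[OF xy(2,1)] by auto
    then have "set_integrable lborel {y..x} g'" using li unfolding loc_integrable_def by blast
    then show ?thesis using lint_cong_I(2)[OF _ sub g0'm[unfolded g0'_def] g0'I gae] by simp
  qed
  have gd0: "g0 x - g0 y = (LINT t:{y..x}|lborel. g0' t)" if xy: "x \<in> oiv a b" "y \<in> oiv a b" "y \<le> x" for x y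
  proof -
    have sub: "{y..x} \<subseteq> oiv a b" using oiv_between[OF xy(2,1)] by auto
    have "(LINT t:{y..x}|lborel. g' t) = (LINT t:{y..x}|lborel. g0' t)"
      using lint_cong_I(1)[OF _ sub g0'm[unfolded g0'_def] g0'I gae] by simp
    then show ?thesis using gd[OF xy(2,1,3)] xy by (simp add: g0_def)
  qed
  have kpos: "AE t in lborel. t \<in> oiv a b \<longrightarrow> 0 < k t" using dd(3) by eventually_elim auto
  have "ennreal (Varp a b p g) = ennreal (Varp a b p0 g0)"
    unfolding g0_def by (subst Varp_transfer[OF g0m[unfolded g0_def]]) simp
  also have "\<dots> \<le> (\<integral>\<^sup>+t. ennreal ((g0' t)\<^sup>2 / k t) * ennreal (FF h0 t) \<partial>lborel)"
    by (rule claim2_core[OF dd(6) hpi dd(1) dd(2) kpos dd(4) dd(5) g0m gi g0'm gint gd0])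
  also have "\<dots> = (\<integral>\<^sup>+t. ennreal (- Tt a b p h t / (h' t * w t)) * ennreal ((g' t)\<^sup>2 * w t * p t) * indicator (oiv a b) t \<partial>lborel)"
  proof (rule nn_integral_cong_AE)
    show "AE t in lborel. ennreal ((g0' t)\<^sup>2 / k t) * ennreal (FF h0 t) = ennreal (- Tt a b p h t / (h' t * w t)) * ennreal ((g' t)\<^sup>2 * w t * p t) * indicator (oiv a b) t"
      using dd(3) p_pos w_pos
    proof eventually_elim
      case (elim t)
      show ?case
      proof (cases "t \<in> oiv a b")
        case True
        then have kt: "0 < k t" "k t = - h' t" and pt: "0 < p t" and wt': "0 < w t" using elim by auto
        have T: "Tt a b p h t = 1 / p t * FF h0 t"
          unfolding Tt_def h0_def using FF_transfer[OF dd(6)[unfolded h0_def] True] by simp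
        have g0t: "g0' t = g' t" using True by (simp add: g0'_def)
        have "- Tt a b p h t / (h' t * w t) * ((g' t)\<^sup>2 * w t * p t) = (g0' t)\<^sup>2 / k t * FF h0 t"
          unfolding T g0t using kt pt wt' by (simp add: field_simps power2_eq_square)
        moreover have "0 \<le> (g' t)\<^sup>2 * w t * p t" using pt wt' by simp
        moreover have "0 \<le> (g0' t)\<^sup>2 / k t" using kt(1) by simp
        ultimately show ?thesis using True kt
          by (simp add: ennreal_mult''[symmetric] ennreal_mult'[symmetric])
      next
        case False
        then show ?thesis by (simp add: g0'_def)
      qed
    qed
  qed
  finally show ?thesis .
qed

lemma RNN:
  assumes L1: "in_L1 a b p h" and wd: "weak_deriv (oiv a b) h h'" and neg: "AE x in lborel. x \<in> oiv a b \<longrightarrow> h' x < 0"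
  shows "AE t in lborel. t \<in> oiv a b \<longrightarrow> 0 \<le> - Tt a b p h t / (h' t * w t)"
proof -
  define k where "k x = indicator (oiv a b) x * max 0 (- h' x)" for x
  define h0 where "h0 x = indicator (oiv a b) x * h x" for x
  note dd = deriv_data[OF wd neg, folded k_def h0_def]
  note [measurable] = dd(1) dd(6)
  have hpi: "integrable lborel (\<lambda>x. h0 x * p0 x)" using L1 L1_transfer[OF dd(6)[unfolded h0_def]] h0_def by simp
  have anti: "\<And>x y. x \<in> oiv a b \<Longrightarrow> y \<in> oiv a b \<Longrightarrow> x \<le> y \<Longrightarrow> h0 y \<le> h0 x"
    by (rule anti_from_deriv[OF dd(2) dd(5)])
  show ?thesis
    using dd(3) p_pos w_pos
  proof eventually_elim
    case (elim t)
    show ?case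
    proof
      assume True: "t \<in> oiv a b"
      then have kt: "0 < k t" "k t = - h' t" and pt: "0 < p t" and wt': "0 < w t" using elim by auto
      have T: "Tt a b p h t = 1 / p t * FF h0 t"
        unfolding Tt_def h0_def using FF_transfer[OF dd(6)[unfolded h0_def] True] by simp
      have F: "0 \<le> FF h0 t" by (rule frep(1)[OF dd(6) hpi anti])
      have "- Tt a b p h t / (h' t * w t) = FF h0 t / (p t * k t * w t)"
        unfolding T using kt pt wt' by (simp add: field_simps)
      also have "\<dots> \<ge> 0" using F kt(1) pt wt' by simp
      finally show "0 \<le> - Tt a b p h t / (h' t * w t)" .
    qed
  qed
qed

end


lemma ess_sup_AE: "AE x in lborel. x \<in> S \<longrightarrow> ereal (f x) \<le> ess_sup_on S f"
proof (cases "{z. AE x in lborel. x \<in> S \<longrightarrow> ereal (f x) \<le> z} = {}")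
  case True
  then show ?thesis unfolding ess_sup_on_def by simp
next
  case False
  obtain g :: "nat \<Rightarrow> ereal" where g: "range g \<subseteq> {z. AE x in lborel. x \<in> S \<longrightarrow> ereal (f x) \<le> z}"
    "Inf {z. AE x in lborel. x \<in> S \<longrightarrow> ereal (f x) \<le> z} = (INF i. g i)"
    using Inf_countable_INF[OF False] by blast
  have "AE x in lborel. \<forall>i. x \<in> S \<longrightarrow> ereal (f x) \<le> g i"
    using g(1) by (subst AE_all_countable) auto
  then show ?thesis unfolding ess_sup_on_def g(2)
    by eventually_elim (auto intro: INF_greatest)
qed

lemma ess_inf_AE: "AE x in lborel. x \<in> S \<longrightarrow> ess_inf_on S f \<le> ereal (f x)"
proof (cases "{z. AE x in lborel. x \<in> S \<longrightarrow> z \<le> ereal (f x)} = {}")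
  case True
  then show ?thesis unfolding ess_inf_on_def by simp
next
  case False
  obtain g :: "nat \<Rightarrow> ereal" where g: "range g \<subseteq> {z. AE x in lborel. x \<in> S \<longrightarrow> z \<le> ereal (f x)}"
    "Sup {z. AE x in lborel. x \<in> S \<longrightarrow> z \<le> ereal (f x)} = (SUP i. g i)"
    using Sup_countable_SUP[OF False] by blast
  have "AE x in lborel. \<forall>i. x \<in> S \<longrightarrow> g i \<le> ereal (f x)"
    using g(1) by (subst AE_all_countable) auto
  then show ?thesis unfolding ess_inf_on_def g(2)
    by eventually_elim (auto intro: SUP_least)
qed

lemma ereal_le_enn: "ereal x \<le> enn2ereal (ennreal x)"
  by (cases "0 \<le> x") (auto simp: ennreal_neg zero_ennreal.rep_eq)

context wsetting begin

lemma C_nn: "0 \<le> poincare_const a b p w"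
  unfolding poincare_const_def by (rule Inf_greatest) auto

lemma UB:
  assumes L1: "in_L1 a b p h" and wd: "weak_deriv (oiv a b) h h'" and neg: "AE x in lborel. x \<in> oiv a b \<longrightarrow> h' x < 0"
  shows "poincare_const a b p w \<le> ess_sup_on (oiv a b) (\<lambda>x. - Tt a b p h x / (h' x * w x))"
proof -
  define r where "r x = - Tt a b p h x / (h' x * w x)" for x
  define Z where "Z = ess_sup_on (oiv a b) r"
  have rZ: "AE x in lborel. x \<in> oiv a b \<longrightarrow> ereal (r x) \<le> Z" unfolding Z_def by (rule ess_sup_AE)
  have rnn: "AE x in lborel. x \<in> oiv a b \<longrightarrow> 0 \<le> r x" unfolding r_def by (rule RNN[OF L1 wd neg])
  have Znn: "0 \<le> Z"
  proof (rule ccontr)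
    assume Zneg: "\<not> 0 \<le> Z"
    have "AE x in lborel. x \<in> oiv a b \<longrightarrow> False"
      using rZ rnn
    proof eventually_elim
      case (elim x)
      show ?case
      proof
        assume "x \<in> oiv a b"
        then have "ereal 0 \<le> ereal (r x)" "ereal (r x) \<le> Z" using elim by auto
        then have "0 \<le> Z" by (metis order_trans zero_ereal_def)
        then show False using Zneg by simp
      qed
    qed
    then show False using oiv_nonnull[OF ab] by blast
  qed
  have "Z \<in> {C. C \<ge> 0 \<and> (\<forall>g g'. in_H1 a b p w g g' \<longrightarrow> ereal (Varp a b p g) \<le> C * energy a b p w g')}"
  proof (intro CollectI conjI allI impI)
    show "0 \<le> Z" by (rule Znn)
    fix g g' assume H1: "in_H1 a b p w g g'"
    define Eg where "Eg = (\<integral>\<^sup>+t. ennreal ((g' t)\<^sup>2 * w t * p t) * indicator (oiv a b) t \<partial>lborel)"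
    have "ennreal (Varp a b p g) \<le> (\<integral>\<^sup>+t. ennreal (r t) * ennreal ((g' t)\<^sup>2 * w t * p t) * indicator (oiv a b) t \<partial>lborel)"
      unfolding r_def by (rule B2[OF L1 wd neg H1])
    also have "\<dots> \<le> (\<integral>\<^sup>+t. e2ennreal Z * (ennreal ((g' t)\<^sup>2 * w t * p t) * indicator (oiv a b) t) \<partial>lborel)"
    proof (rule nn_integral_mono_AE)
      show "AE t in lborel. ennreal (r t) * ennreal ((g' t)\<^sup>2 * w t * p t) * indicator (oiv a b) t
          \<le> e2ennreal Z * (ennreal ((g' t)\<^sup>2 * w t * p t) * indicator (oiv a b) t)"
        using rZ
      proof eventually_elim
        case (elim t)
        show ?case
        proof (cases "t \<in> oiv a b")
          case True
          then have "ennreal (r t) \<le> e2ennreal Z" using elim e2ennreal_mono[of "ereal (r t)" Z] by simp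
          then have "ennreal (r t) * ennreal ((g' t)\<^sup>2 * w t * p t) \<le> e2ennreal Z * ennreal ((g' t)\<^sup>2 * w t * p t)"
            by (rule mult_right_mono) simp
          then show ?thesis using True by simp
        qed simp
      qed
    qed
    also have "\<dots> = e2ennreal Z * Eg" unfolding Eg_def
    proof (rule nn_integral_cmult)
      have "loc_integrable (oiv a b) g'" using H1 unfolding in_H1_def weak_deriv_def by blast
      then have [measurable]: "(\<lambda>x. indicator (oiv a b) x * g' x) \<in> borel_measurable borel"
        by (rule loc_integrable_meas[OF ab])
      have "(\<lambda>x. ennreal ((g' x)\<^sup>2 * w x * p x) * indicator (oiv a b) x)
        = (\<lambda>x. ennreal ((indicator (oiv a b) x * g' x)\<^sup>2 * (indicator (oiv a b) x * w x) * (indicator (oiv a b) x * p x)) * indicator (oiv a b) x)"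
        by (intro ext) (simp add: indicator_def)
      also have "\<dots> \<in> borel_measurable lborel" by measurable
      finally show "(\<lambda>x. ennreal ((g' x)\<^sup>2 * w x * p x) * indicator (oiv a b) x) \<in> borel_measurable lborel" .
    qed
    finally have 1: "ennreal (Varp a b p g) \<le> e2ennreal Z * Eg" .
    have "ereal (Varp a b p g) \<le> enn2ereal (ennreal (Varp a b p g))" by (rule ereal_le_enn)
    also have "\<dots> \<le> enn2ereal (e2ennreal Z * Eg)" using 1 by (subst less_eq_ennreal.rep_eq[symmetric])
    also have "\<dots> = Z * energy a b p w g'"
      unfolding times_ennreal.rep_eq energy_def Eg_def enn2ereal_e2ennreal[OF Znn] ..
    finally show "ereal (Varp a b p g) \<le> Z * energy a b p w g'" .
  qed
  then show ?thesis unfolding poincare_const_def Z_def r_def by (rule Inf_lower)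
qed

lemma meas_X:
  assumes [measurable]: "(\<lambda>x. indicator (oiv a b) x * g' x) \<in> borel_measurable borel"
  shows "(\<lambda>x. ennreal ((g' x)\<^sup>2 * w x * p x) * indicator (oiv a b) x) \<in> borel_measurable lborel"
proof -
  have "(\<lambda>x. ennreal ((g' x)\<^sup>2 * w x * p x) * indicator (oiv a b) x)
    = (\<lambda>x. ennreal ((indicator (oiv a b) x * g' x)\<^sup>2 * (indicator (oiv a b) x * w x) * (indicator (oiv a b) x * p x)) * indicator (oiv a b) x)"
    by (intro ext) (simp add: indicator_def)
  also have "\<dots> \<in> borel_measurable lborel" by measurable
  finally show ?thesis .
qed

lemma Varp_nn: "0 \<le> Varp a b p h"
  unfolding Varp_def set_lebesgue_integral_def
  by (rule integral_nonneg_AE) (use p_pos in \<open>eventually_elim, auto simp: indicator_def\<close>)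

lemma LB:
  assumes L2: "in_L2 a b p h" and wd: "weak_deriv (oiv a b) h h'" and neg: "AE x in lborel. x \<in> oiv a b \<longrightarrow> h' x < 0"
  shows "ess_inf_on (oiv a b) (\<lambda>x. - Tt a b p h x / (h' x * w x)) \<le> poincare_const a b p w"
proof -
  define r where "r x = - Tt a b p h x / (h' x * w x)" for x
  define Y where "Y = ess_inf_on (oiv a b) r"
  have rY: "AE x in lborel. x \<in> oiv a b \<longrightarrow> Y \<le> ereal (r x)" unfolding Y_def by (rule ess_inf_AE)
  show ?thesis
  proof (cases "Y \<le> 0")
    case True
    then show ?thesis using C_nn unfolding Y_def r_def by (rule order_trans)
  next
    case False
    have "Y \<noteq> \<infinity>"
    proof
      assume Yinf: "Y = \<infinity>"
      have "AE x in lborel. x \<in> oiv a b \<longrightarrow> False" using rY by eventually_elim (use Yinf in auto)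
      then show False using oiv_nonnull[OF ab] by blast
    qed
    with False obtain y where Yy: "Y = ereal y" and ypos: "0 < y" by (cases Y) auto
    define X where "X t = (h' t)\<^sup>2 * w t * p t" for t
    define E where "E = (\<integral>\<^sup>+t. ennreal (X t) * indicator (oiv a b) t \<partial>lborel)"
    define V where "V = Varp a b p h"
    have h'm[measurable]: "(\<lambda>x. indicator (oiv a b) x * h' x) \<in> borel_measurable borel"
      by (rule deriv_data(7)[OF wd neg])
    have Xm[measurable]: "(\<lambda>x. ennreal (X x) * indicator (oiv a b) x) \<in> borel_measurable lborel"
      unfolding X_def by (rule meas_X[OF h'm])
    have B: "ennreal V = (\<integral>\<^sup>+t. ennreal (r t) * ennreal (X t) * indicator (oiv a b) t \<partial>lborel)"
      unfolding V_def r_def X_def by (rule B1[OF L2 wd neg])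
    have "ennreal y * E = (\<integral>\<^sup>+t. ennreal y * (ennreal (X t) * indicator (oiv a b) t) \<partial>lborel)"
      unfolding E_def by (rule nn_integral_cmult[symmetric]) simp
    also have "\<dots> \<le> (\<integral>\<^sup>+t. ennreal (r t) * ennreal (X t) * indicator (oiv a b) t \<partial>lborel)"
    proof (rule nn_integral_mono_AE)
      show "AE t in lborel. ennreal y * (ennreal (X t) * indicator (oiv a b) t) \<le> ennreal (r t) * ennreal (X t) * indicator (oiv a b) t"
        using rY
      proof eventually_elim
        case (elim t)
        show ?case
        proof (cases "t \<in> oiv a b")
          case True
          then have "y \<le> r t" using elim Yy by simp
          then have "ennreal y * ennreal (X t) \<le> ennreal (r t) * ennreal (X t)"
            by (intro mult_right_mono ennreal_leI) simp_all
          then show ?thesis using True by simp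
        qed simp
      qed
    qed
    finally have low: "ennreal y * E \<le> ennreal V" using B by simp
    have Epos: "E \<noteq> 0"
    proof
      assume "E = 0"
      then have "AE t in lborel. ennreal (X t) * indicator (oiv a b) t = 0"
        unfolding E_def using nn_integral_0_iff_AE[OF Xm] by simp
      then have "AE t in lborel. t \<in> oiv a b \<longrightarrow> False"
        using neg p_pos w_pos
      proof eventually_elim
        case (elim t)
        show ?case
        proof
          assume t: "t \<in> oiv a b"
          then have "0 < X t" using elim unfolding X_def by simp
          then show False using elim(1) t by simp
        qed
      qed
      then show False using oiv_nonnull[OF ab] by blast
    qed
    have Efin: "E \<noteq> \<infinity>"
    proof
      assume "E = \<infinity>"
      then have "ennreal y * E = \<infinity>" using ypos by (simp add: ennreal_mult_eq_top_iff)
      then show False using low by (simp add: top_unique)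
    qed
    have Vpos: "0 < V"
    proof -
      have "0 < ennreal y * E" using ypos Epos by (simp add: zero_less_iff_neq_zero)
      then have "0 < ennreal V" using low by (rule less_le_trans)
      then show ?thesis by simp
    qed
    obtain e where Ee: "enn2ereal E = ereal e" and epos: "0 < e"
    proof -
      have "enn2ereal E \<noteq> \<infinity>" using Efin by (simp add: enn2ereal_eq_top_iff)
      moreover have "enn2ereal E \<noteq> 0" using Epos by (metis e2ennreal_enn2ereal e2ennreal_ereal ennreal_0 zero_ereal_def)
      moreover have "0 \<le> enn2ereal E" by simp
      ultimately show ?thesis using that by (cases "enn2ereal E") auto
    qed
    have ye: "ereal y * ereal e \<le> ereal V"
    proof -
      have "enn2ereal (ennreal y * E) \<le> enn2ereal (ennreal V)" using low by (subst less_eq_ennreal.rep_eq[symmetric])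
      then show ?thesis unfolding times_ennreal.rep_eq Ee using ypos Vpos by simp
    qed
    have en: "energy a b p w h' = ereal e" unfolding energy_def using Ee by (simp add: E_def X_def)
    have H1: "in_H1 a b p w h h'"
      unfolding in_H1_def
    proof (intro conjI)
      show "in_L2 a b p h" by (rule L2)
      show "weak_deriv (oiv a b) h h'" by (rule wd)
      show "set_integrable lborel (oiv a b) (\<lambda>x. (h' x)\<^sup>2 * (p x * w x))"
        unfolding set_integrable_def
      proof (rule integrableI_nonneg)
        have "(\<lambda>x. indicator (oiv a b) x *\<^sub>R ((h' x)\<^sup>2 * (p x * w x))) =
          (\<lambda>x. (indicator (oiv a b) x * h' x)\<^sup>2 * ((indicator (oiv a b) x * p x) * (indicator (oiv a b) x * w x)))"
          by (intro ext) (simp add: indicator_def)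
        also have "\<dots> \<in> borel_measurable lborel" by measurable
        finally show "(\<lambda>x. indicator (oiv a b) x *\<^sub>R ((h' x)\<^sup>2 * (p x * w x))) \<in> borel_measurable lborel" .
        show "AE x in lborel. 0 \<le> indicator (oiv a b) x *\<^sub>R ((h' x)\<^sup>2 * (p x * w x))"
          using p_pos w_pos by eventually_elim (auto simp: indicator_def)
        have "(\<integral>\<^sup>+x. ennreal (indicator (oiv a b) x *\<^sub>R ((h' x)\<^sup>2 * (p x * w x))) \<partial>lborel) = E"
          unfolding E_def X_def by (intro nn_integral_cong) (simp add: indicator_def mult_ac)
        then show "(\<integral>\<^sup>+x. ennreal (indicator (oiv a b) x *\<^sub>R ((h' x)\<^sup>2 * (p x * w x))) \<partial>lborel) < \<infinity>"
          using Efin by (simp add: top.not_eq_extremum)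
      qed
    qed
    have "Y \<le> Inf {C. C \<ge> 0 \<and> (\<forall>g g'. in_H1 a b p w g g' \<longrightarrow> ereal (Varp a b p g) \<le> C * energy a b p w g')}"
    proof (rule Inf_greatest)
      fix C assume "C \<in> {C. C \<ge> 0 \<and> (\<forall>g g'. in_H1 a b p w g g' \<longrightarrow> ereal (Varp a b p g) \<le> C * energy a b p w g')}"
      then have Cnn: "0 \<le> C" and "\<forall>g g'. in_H1 a b p w g g' \<longrightarrow> ereal (Varp a b p g) \<le> C * energy a b p w g'" by auto
      then have CV: "ereal V \<le> C * ereal e" using H1 en unfolding V_def by metis
      show "Y \<le> C"
      proof (cases C)
        case (real c)
        then have "y * e \<le> c * e" using ye CV by simp
        then have "y \<le> c" using epos by simp
        then show ?thesis using Yy real by simp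
      qed (use Cnn in auto)
    qed
    then show ?thesis unfolding poincare_const_def Y_def r_def .
  qed
qed

end

theorem theorem3p1:
  fixes a b :: ereal and p w h1 h1' h2 h2' :: "real \<Rightarrow> real"
  assumes "a < b"
    and "is_density a b p"
    and "is_weight a b p w"
    and "in_L1 a b p h1" and "weak_deriv (oiv a b) h1 h1'"
    and "in_L2 a b p h2" and "weak_deriv (oiv a b) h2 h2'"
    and "AE x in lborel. x \<in> oiv a b \<longrightarrow> h1' x < 0"
    and "AE x in lborel. x \<in> oiv a b \<longrightarrow> h2' x < 0"
  shows "ess_inf_on (oiv a b) (\<lambda>x. - Tt a b p h2 x / (h2' x * w x)) \<le> poincare_const a b p w
       \<and> poincare_const a b p w \<le> ess_sup_on (oiv a b) (\<lambda>x. - Tt a b p h1 x / (h1' x * w x))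
       \<and> ((\<exists>c. AE x in lborel. x \<in> oiv a b \<longrightarrow> - Tt a b p h2 x / (h2' x * w x) = c)
            \<longrightarrow> ereal (Varp a b p h2) = poincare_const a b p w * energy a b p w h2')"
proof -
  interpret wsetting a b p w using assms(1-3) by unfold_locales
  note L1 = assms(4) and wd1 = assms(5) and L2 = assms(6) and wd2 = assms(7) and neg1 = assms(8) and neg2 = assms(9)
  define r2 where "r2 x = - Tt a b p h2 x / (h2' x * w x)" for x
  have lb: "ess_inf_on (oiv a b) r2 \<le> poincare_const a b p w" unfolding r2_def by (rule LB[OF L2 wd2 neg2])
  have ub2: "poincare_const a b p w \<le> ess_sup_on (oiv a b) r2" unfolding r2_def by (rule UB[OF L2_L1[OF L2] wd2 neg2])
  have part3: "ereal (Varp a b p h2) = poincare_const a b p w * energy a b p w h2'"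
    if ex: "\<exists>c. AE x in lborel. x \<in> oiv a b \<longrightarrow> r2 x = c"
  proof -
    obtain c where c: "AE x in lborel. x \<in> oiv a b \<longrightarrow> r2 x = c" using ex by blast
    have "ereal c \<le> ess_inf_on (oiv a b) r2"
      unfolding ess_inf_on_def by (rule Sup_upper) (use c in \<open>auto elim: eventually_mono\<close>)
    moreover have "ess_sup_on (oiv a b) r2 \<le> ereal c"
      unfolding ess_sup_on_def by (rule Inf_lower) (use c in \<open>auto elim: eventually_mono\<close>)
    ultimately have Cc: "poincare_const a b p w = ereal c" using lb ub2 by (metis order_antisym order_trans)
    then have cnn: "0 \<le> c" using C_nn by simp
    define X where "X t = (h2' t)\<^sup>2 * w t * p t" for t
    define E where "E = (\<integral>\<^sup>+t. ennreal (X t) * indicator (oiv a b) t \<partial>lborel)"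
    have h'm[measurable]: "(\<lambda>x. indicator (oiv a b) x * h2' x) \<in> borel_measurable borel"
      by (rule deriv_data(7)[OF wd2 neg2])
    have Xm[measurable]: "(\<lambda>x. ennreal (X x) * indicator (oiv a b) x) \<in> borel_measurable lborel"
      unfolding X_def by (rule meas_X[OF h'm])
    have "ennreal (Varp a b p h2) = (\<integral>\<^sup>+t. ennreal (r2 t) * ennreal (X t) * indicator (oiv a b) t \<partial>lborel)"
      unfolding r2_def X_def by (rule B1[OF L2 wd2 neg2])
    also have "\<dots> = (\<integral>\<^sup>+t. ennreal c * (ennreal (X t) * indicator (oiv a b) t) \<partial>lborel)"
      by (rule nn_integral_cong_AE) (use c in \<open>eventually_elim, auto simp: indicator_def\<close>)
    also have "\<dots> = ennreal c * E" unfolding E_def by (rule nn_integral_cmult) simp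
    finally have VE: "ennreal (Varp a b p h2) = ennreal c * E" .
    have "ereal (Varp a b p h2) = enn2ereal (ennreal (Varp a b p h2))" using Varp_nn by simp
    also have "\<dots> = ereal c * energy a b p w h2'"
      unfolding VE times_ennreal.rep_eq energy_def E_def X_def using cnn by simp
    finally show ?thesis using Cc by simp
  qed
  show ?thesis
    using lb UB[OF L1 wd1 neg1] part3 unfolding r2_def by blast
qed


end
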